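(* Let $d$ be a positive integer with $d\equiv 0\pmod 4$, put $d'=d/4$, let $k$ be a rational and $\varepsilon$ a positive real such that $$2\le k<2+\frac{1}{2d'-1}\qquad\text{and}\qquad \varepsilon\sum_{j=0}^{d'-2}(k-1)^{2j+2}+\varepsilon\cdot\frac{k-1+\varepsilon}{k+\varepsilon}\ \ge\ \frac{1}{k+\varepsilon}.$$ If $G$ is a fractionally $k$-colorable graph and $W\subseteq V(G)$ is a set of vertices at pairwise distance at least $d$, then every fractional $(k+\varepsilon)$-precoloring of $W$ extends to a fractional $(k+\varepsilon)$-coloring of $G$.
   Context: A fractional $m$-coloring of a graph (real $m>0$) assigns to each vertex a measurable subset of $[0,m)$ of Lebesgue measure one so that adjacent vertices receive disjoint sets; a graph is fractionally $k$-colorable if it has a fractional $k$-coloring. A fractional $m$-precoloring of a vertex set $W$ assigns measurable subsets of $[0,m)$ of measure one to the vertices of $W$; it extends if some fractional $m$-coloring of the whole graph agrees with it on $W$. Graphs are finite. *)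

theory Defs
  imports "HOL-Analysis.Analysis"
begin

definition graph :: "'a set \<Rightarrow> ('a \<Rightarrow> 'a \<Rightarrow> bool) \<Rightarrow> bool" where
  "graph V E \<longleftrightarrow> finite V \<and> (\<forall>u v. E u v \<longrightarrow> u \<in> V \<and> v \<in> V)
     \<and> (\<forall>u v. E u v \<longrightarrow> E v u) \<and> (\<forall>u. \<not> E u u)"

definition unit_set :: "real \<Rightarrow> real set \<Rightarrow> bool" where
  "unit_set m S \<longleftrightarrow> S \<in> sets lebesgue \<and> S \<subseteq> {0..<m} \<and> emeasure lebesgue S = 1"

definition frac_coloring :: "'a set \<Rightarrow> ('a \<Rightarrow> 'a \<Rightarrow> bool) \<Rightarrow> real \<Rightarrow> ('a \<Rightarrow> real set) \<Rightarrow> bool" where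
  "frac_coloring V E m c \<longleftrightarrow> (\<forall>v\<in>V. unit_set m (c v))
     \<and> (\<forall>u\<in>V. \<forall>v\<in>V. E u v \<longrightarrow> c u \<inter> c v = {})"

definition frac_colorable :: "'a set \<Rightarrow> ('a \<Rightarrow> 'a \<Rightarrow> bool) \<Rightarrow> real \<Rightarrow> bool" where
  "frac_colorable V E k \<longleftrightarrow> (\<exists>c. frac_coloring V E k c)"

definition frac_precoloring :: "'a set \<Rightarrow> real \<Rightarrow> ('a \<Rightarrow> real set) \<Rightarrow> bool" where
  "frac_precoloring W m c \<longleftrightarrow> (\<forall>w\<in>W. unit_set m (c w))"

definition precoloring_extends ::
  "'a set \<Rightarrow> ('a \<Rightarrow> 'a \<Rightarrow> bool) \<Rightarrow> real \<Rightarrow> 'a set \<Rightarrow> ('a \<Rightarrow> real set) \<Rightarrow> bool" where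
  "precoloring_extends V E m W c \<longleftrightarrow> (\<exists>c'. frac_coloring V E m c' \<and> (\<forall>w\<in>W. c' w = c w))"

text \<open>Vertices at pairwise distance at least d: no walk of length < d joins two
distinct vertices of W (walks of length n are given by the n-th relation power).\<close>
definition pairwise_far :: "('a \<Rightarrow> 'a \<Rightarrow> bool) \<Rightarrow> 'a set \<Rightarrow> nat \<Rightarrow> bool" where
  "pairwise_far E W d \<longleftrightarrow> (\<forall>u\<in>W. \<forall>v\<in>W. u \<noteq> v \<longrightarrow> (\<forall>n<d. \<not> (E ^^ n) u v))"

end

theory Submission
  imports Defs
begin

lemma measure_Ico_leb: "a \<le> b \<Longrightarrow> measure lebesgue {a..<(b::real)} = b - a"
  by simp

lemma lmeas_Ico: "{a..<(b::real)} \<in> lmeasurable"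
  by (simp add: bounded_set_imp_lmeasurable)

lemma lmeas_Icc: "{a..(b::real)} \<in> lmeasurable"
  by (simp add: bounded_set_imp_lmeasurable)

lemma lmeas_bounded: "A \<in> sets lebesgue \<Longrightarrow> A \<subseteq> {lo..hi::real} \<Longrightarrow> A \<in> lmeasurable"
  by (rule bounded_set_imp_lmeasurable[OF bounded_subset[OF bounded_closed_interval]])

lemma split_exists:
  fixes A :: "real set"
  assumes A: "A \<in> sets lebesgue" "A \<subseteq> {lo..hi}" and t: "0 \<le> t" "t \<le> measure lebesgue A"
  shows "\<exists>B. B \<in> sets lebesgue \<and> B \<subseteq> A \<and> measure lebesgue B = t"
proof -
  define f where "f x = measure lebesgue (A \<inter> {..x})" for x
  have Al: "A \<in> lmeasurable" using lmeas_bounded A by blast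
  have meas: "A \<inter> {..x} \<in> sets lebesgue" for x using A by auto
  have lip: "f y - f x \<le> y - x" "f x \<le> f y" if "x \<le> y" for x y
  proof -
    have eq: "A \<inter> {..y} = (A \<inter> {..x}) \<union> (A \<inter> {x<..y})" using that by auto
    have l1: "A \<inter> {..x} \<in> lmeasurable" "A \<inter> {x<..y} \<in> lmeasurable"
    proof -
      have "A \<inter> {x<..y} \<in> sets lebesgue" using A(1) by auto
      then show "A \<inter> {..x} \<in> lmeasurable" "A \<inter> {x<..y} \<in> lmeasurable"
        using fmeasurableI2[OF Al, of "A \<inter> {..x}"] fmeasurableI2[OF Al, of "A \<inter> {x<..y}"] meas[of x]
        by blast+
    qed
    have "f y = f x + measure lebesgue (A \<inter> {x<..y})"
      unfolding f_def eq
      by (rule measure_Union) (use l1 in \<open>auto simp: fmeasurable_def\<close>)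
    moreover have "measure lebesgue (A \<inter> {x<..y}) \<le> measure lebesgue {x<..y}"
      by (rule measure_mono_fmeasurable) (auto simp: bounded_set_imp_lmeasurable A)
    moreover have "measure lebesgue {x<..y} = y - x" using that by simp
    ultimately show "f y - f x \<le> y - x" "f x \<le> f y" by auto
  qed
  have cont: "continuous_on {lo..hi} f"
    unfolding continuous_on_iff
  proof (intro ballI allI impI)
    fix x e :: real assume "0 < e"
    show "\<exists>d>0. \<forall>x'\<in>{lo..hi}. dist x' x < d \<longrightarrow> dist (f x') (f x) < e"
    proof (intro exI[of _ e] conjI ballI impI)
      fix x' assume "dist x' x < e"
      then show "dist (f x') (f x) < e"
        using lip[of x x'] lip[of x' x] unfolding dist_real_def by (cases "x \<le> x'") auto
    qed fact
  qed
  have "A \<inter> {..lo} \<subseteq> {lo..lo}" using A by auto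
  then have "f lo \<le> measure lebesgue {lo..lo}"
    unfolding f_def by (intro measure_mono_fmeasurable) (use meas lmeas_Icc[of lo lo] in auto)
  then have f0: "f lo \<le> t" using t by simp
  have "A \<inter> {..hi} = A" using A by auto
  then have f1: "t \<le> f hi" using t by (simp add: f_def)
  show ?thesis
  proof (cases "t = 0")
    case True then show ?thesis by (intro exI[of _ "{}"]) auto
  next
    case False
    then have "A \<noteq> {}" using t by auto
    then have "lo \<le> hi" using A by auto
    from IVT'[of f lo t hi, OF f0 f1 this cont] obtain x where "f x = t" by blast
    then show ?thesis using meas unfolding f_def by blast
  qed
qed

definition atom :: "'i set \<Rightarrow> ('i \<Rightarrow> real set) \<Rightarrow> real set \<Rightarrow> 'i set \<Rightarrow> real set" where
  "atom I F A J = A - (\<Union>i\<in>J. A - F i) - (\<Union>i\<in>I-J. F i)"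

lemma atom_sub: "atom I F A J \<subseteq> A" by (auto simp: atom_def)

lemma atom_F: "x \<in> atom I F A J \<Longrightarrow> J \<subseteq> I \<Longrightarrow> i \<in> I \<Longrightarrow> (x \<in> F i \<longleftrightarrow> i \<in> J)"
  unfolding atom_def by blast

lemma atom_disj: "J \<subseteq> I \<Longrightarrow> J' \<subseteq> I \<Longrightarrow> J \<noteq> J' \<Longrightarrow> atom I F A J \<inter> atom I F A J' = {}"
proof (rule ccontr)
  assume a: "J \<subseteq> I" "J' \<subseteq> I" "J \<noteq> J'" "atom I F A J \<inter> atom I F A J' \<noteq> {}"
  then obtain x where x: "x \<in> atom I F A J" "x \<in> atom I F A J'" by blast
  have "\<forall>i\<in>I. i \<in> J \<longleftrightarrow> i \<in> J'" using atom_F[OF x(1) a(1)] atom_F[OF x(2) a(2)] by blast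
  then have "J = J'" using a(1,2) by blast
  then show False using a(3) by blast
qed

lemma atom_mem: "x \<in> A \<Longrightarrow> x \<in> atom I F A {i\<in>I. x \<in> F i}"
  unfolding atom_def by blast

lemma atom_sets: "finite I \<Longrightarrow> A \<in> sets lebesgue \<Longrightarrow> (\<forall>i\<in>I. F i \<in> sets lebesgue) \<Longrightarrow> J \<subseteq> I
   \<Longrightarrow> atom I F A J \<in> sets lebesgue"
  unfolding atom_def
  by (intro sets.Diff sets.finite_UN) (auto intro: finite_subset)

lemma measure_UN_atoms:
  fixes Y :: "'i set \<Rightarrow> real set"
  assumes "finite I" "G \<subseteq> Pow I" "\<And>J. J \<in> G \<Longrightarrow> Y J \<subseteq> atom I F A J"
    "\<And>J. J \<in> G \<Longrightarrow> Y J \<in> sets lebesgue" "A \<subseteq> {lo..hi}"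
  shows "measure lebesgue (\<Union>J\<in>G. Y J) = (\<Sum>J\<in>G. measure lebesgue (Y J))"
proof (rule measure_UNION')
  show "finite G" using assms(1,2) by (meson finite_Pow_iff finite_subset)
  show "Y J \<in> lmeasurable" if "J \<in> G" for J
    proof -
    have "Y J \<subseteq> {lo..hi}" using assms(3,5) that atom_sub[of I F A J] by blast
    then show ?thesis using assms(4) that by (intro lmeas_bounded[of _ lo hi])
  qed
  show "pairwise (\<lambda>i j. disjnt (Y i) (Y j)) G"
    unfolding pairwise_def disjnt_def
  proof (intro ballI impI)
    fix J J' assume "J \<in> G" "J' \<in> G" "J \<noteq> J'"
    then show "Y J \<inter> Y J' = {}" using atom_disj[of J I J' F A] assms(2,3) by blast
  qed
qed

lemma multi_split:
  fixes \<tau> :: "'i \<Rightarrow> real" and A :: "real set"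
  assumes "finite I" "A \<in> sets lebesgue" "A \<subseteq> {lo..hi}" "\<forall>i\<in>I. 0 \<le> \<tau> i"
    "(\<Sum>i\<in>I. \<tau> i) \<le> measure lebesgue A"
  shows "\<exists>P. (\<forall>i\<in>I. P i \<in> sets lebesgue \<and> P i \<subseteq> A \<and> measure lebesgue (P i) = \<tau> i)
              \<and> disjoint_family_on P I"
  using assms(1,2,3,4,5)
proof (induction I arbitrary: A rule: finite_induct)
  case empty
  then show ?case by (auto simp: disjoint_family_on_def)
next
  case (insert j I)
  have s: "\<tau> j + (\<Sum>i\<in>I. \<tau> i) \<le> measure lebesgue A" using insert by simp
  have "(\<Sum>i\<in>I. \<tau> i) \<ge> 0" using insert by (simp add: sum_nonneg)
  then obtain B where B: "B \<in> sets lebesgue" "B \<subseteq> A" "measure lebesgue B = \<tau> j"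
    using split_exists[OF insert(4,5), of "\<tau> j"] insert(6) s by auto
  have Al: "A \<in> lmeasurable" using lmeas_bounded insert(4,5) by blast
  have "measure lebesgue (A - B) = measure lebesgue A - \<tau> j"
    using B Al by (subst measure_Diff) (auto simp: fmeasurable_def)
  then have "(\<Sum>i\<in>I. \<tau> i) \<le> measure lebesgue (A - B)" using s by simp
  moreover have "A - B \<in> sets lebesgue" "A - B \<subseteq> {lo..hi}" using B insert(4,5) by auto
  ultimately obtain P where P: "\<forall>i\<in>I. P i \<in> sets lebesgue \<and> P i \<subseteq> A - B \<and> measure lebesgue (P i) = \<tau> i"
    "disjoint_family_on P I"
    using insert(3)[of "A - B"] insert(6) by auto
  define P' where "P' = P(j := B)"
  have "\<forall>i\<in>insert j I. P' i \<in> sets lebesgue \<and> P' i \<subseteq> A \<and> measure lebesgue (P' i) = \<tau> i"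
    using P B insert(2) by (auto simp: P'_def)
  moreover have "disjoint_family_on P' (insert j I)"
    using P(2) P(1) insert(2) unfolding disjoint_family_on_def P'_def by auto
  ultimately show ?case by blast
qed

lemma A_atoms: "A = (\<Union>J\<in>Pow I. atom I F A J)"
proof
  show "A \<subseteq> (\<Union>J\<in>Pow I. atom I F A J)"
  proof
    fix x assume "x \<in> A"
    have "{i\<in>I. x \<in> F i} \<in> Pow I" by auto
    then show "x \<in> (\<Union>J\<in>Pow I. atom I F A J)" using atom_mem[OF \<open>x \<in> A\<close>, of I F] by (rule UN_I)
  qed
  show "(\<Union>J\<in>Pow I. atom I F A J) \<subseteq> A" using atom_sub[of I F A] by (simp add: UN_least)
qed

lemma AF_atoms: "i \<in> I \<Longrightarrow> A \<inter> F i = (\<Union>J\<in>{J\<in>Pow I. i \<in> J}. atom I F A J)"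
proof
  assume i: "i \<in> I"
  show "A \<inter> F i \<subseteq> (\<Union>J\<in>{J\<in>Pow I. i \<in> J}. atom I F A J)"
  proof
    fix x assume x: "x \<in> A \<inter> F i"
    then have "x \<in> atom I F A {i\<in>I. x \<in> F i}" using atom_mem[of x A I F] by simp
    moreover have "{i\<in>I. x \<in> F i} \<in> {J\<in>Pow I. i \<in> J}" using x i by auto
    ultimately show "x \<in> (\<Union>J\<in>{J\<in>Pow I. i \<in> J}. atom I F A J)" by (rule UN_I[rotated])
  qed
  show "(\<Union>J\<in>{J\<in>Pow I. i \<in> J}. atom I F A J) \<subseteq> A \<inter> F i"
  proof
    fix x assume "x \<in> (\<Union>J\<in>{J\<in>Pow I. i \<in> J}. atom I F A J)"
    then obtain J where J: "J \<subseteq> I" "i \<in> J" "x \<in> atom I F A J" by blast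
    then show "x \<in> A \<inter> F i" using atom_F[OF J(3) J(1) i] atom_sub[of I F A J] by blast
  qed
qed

lemma prop_split:
  fixes F :: "'i \<Rightarrow> real set" and \<rho> :: "'x \<Rightarrow> real" and A :: "real set"
  assumes fin: "finite I" "finite X" and A: "A \<in> sets lebesgue" "A \<subseteq> {lo..hi}"
    and F: "\<forall>i\<in>I. F i \<in> sets lebesgue" and rho: "\<forall>x\<in>X. \<rho> x \<ge> 0" "(\<Sum>x\<in>X. \<rho> x) \<le> 1"
  shows "\<exists>P. (\<forall>x\<in>X. P x \<in> sets lebesgue \<and> P x \<subseteq> A
              \<and> measure lebesgue (P x) = \<rho> x * measure lebesgue A
              \<and> (\<forall>i\<in>I. measure lebesgue (P x \<inter> F i) = \<rho> x * measure lebesgue (A \<inter> F i)))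
            \<and> disjoint_family_on P X"
proof -
  have asets: "atom I F A J \<in> sets lebesgue" if "J \<in> Pow I" for J
    using atom_sets[OF fin(1) A(1) F] that by blast
  have abnd: "atom I F A J \<subseteq> {lo..hi}" for J using atom_sub[of I F A J] A(2) by blast
  have "\<exists>Q. (\<forall>x\<in>X. Q x \<in> sets lebesgue \<and> Q x \<subseteq> atom I F A J
            \<and> measure lebesgue (Q x) = \<rho> x * measure lebesgue (atom I F A J)) \<and> disjoint_family_on Q X"
    if "J \<in> Pow I" for J
  proof (rule multi_split[OF fin(2) asets[OF that] abnd])
    show "\<forall>x\<in>X. 0 \<le> \<rho> x * measure lebesgue (atom I F A J)" using rho by simp
    have "(\<Sum>x\<in>X. \<rho> x * measure lebesgue (atom I F A J)) = (\<Sum>x\<in>X. \<rho> x) * measure lebesgue (atom I F A J)"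
      by (simp add: sum_distrib_right)
    also have "\<dots> \<le> 1 * measure lebesgue (atom I F A J)"
      using rho(2) by (intro mult_right_mono) auto
    finally show "(\<Sum>x\<in>X. \<rho> x * measure lebesgue (atom I F A J)) \<le> measure lebesgue (atom I F A J)" by simp
  qed
  then have "\<forall>J\<in>Pow I. \<exists>Q. (\<forall>x\<in>X. Q x \<in> sets lebesgue \<and> Q x \<subseteq> atom I F A J
            \<and> measure lebesgue (Q x) = \<rho> x * measure lebesgue (atom I F A J)) \<and> disjoint_family_on Q X"
    by blast
  from bchoice[OF this] obtain Q where Q0: "\<forall>J\<in>Pow I. (\<forall>x\<in>X. Q J x \<in> sets lebesgue \<and> Q J x \<subseteq> atom I F A J
            \<and> measure lebesgue (Q J x) = \<rho> x * measure lebesgue (atom I F A J)) \<and> disjoint_family_on (Q J) X"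
    by (elim exE)
  have Q1: "Q J x \<in> sets lebesgue" "Q J x \<subseteq> atom I F A J"
    "measure lebesgue (Q J x) = \<rho> x * measure lebesgue (atom I F A J)"
    if "J \<in> Pow I" "x \<in> X" for J x using Q0 that by auto
  have Q2: "disjoint_family_on (Q J) X" if "J \<in> Pow I" for J using Q0 that by auto
  define P where "P x = (\<Union>J\<in>Pow I. Q J x)" for x
  have finP: "finite (Pow I)" using fin by simp
  have meas_sum: "measure lebesgue (\<Union>J\<in>G. Q J x) = \<rho> x * measure lebesgue (\<Union>J\<in>G. atom I F A J)"
    if "G \<subseteq> Pow I" "x \<in> X" for G x
  proof -
    have "measure lebesgue (\<Union>J\<in>G. Q J x) = (\<Sum>J\<in>G. measure lebesgue (Q J x))"
      by (rule measure_UN_atoms[OF fin(1) that(1), of _ F A lo hi]) (use Q1[OF subsetD[OF that(1)] that(2)] A(2) in simp_all)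
    also have "\<dots> = (\<Sum>J\<in>G. \<rho> x * measure lebesgue (atom I F A J))"
      using Q1 that by (intro sum.cong) auto
    also have "\<dots> = \<rho> x * (\<Sum>J\<in>G. measure lebesgue (atom I F A J))"
      by (simp add: sum_distrib_left)
    also have "(\<Sum>J\<in>G. measure lebesgue (atom I F A J)) = measure lebesgue (\<Union>J\<in>G. atom I F A J)"
      by (rule measure_UN_atoms[OF fin(1) that(1), of _ F A lo hi, symmetric]) (use asets[OF subsetD[OF that(1)]] A(2) in simp_all)
    finally show ?thesis .
  qed
  have "P x \<in> sets lebesgue" if "x \<in> X" for x
    unfolding P_def using Q1 that finP by (intro sets.finite_UN) auto
  moreover have "P x \<subseteq> A" if "x \<in> X" for x
    unfolding P_def using Q1(2) that atom_sub[of I F A] by blast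
  moreover have "measure lebesgue (P x) = \<rho> x * measure lebesgue A" if "x \<in> X" for x
    using meas_sum[of "Pow I" x] that A_atoms[of A I F] unfolding P_def by simp
  moreover have "measure lebesgue (P x \<inter> F i) = \<rho> x * measure lebesgue (A \<inter> F i)" if "x \<in> X" "i \<in> I" for x i
  proof -
    have "P x \<inter> F i = (\<Union>J\<in>{J\<in>Pow I. i \<in> J}. Q J x)"
    proof
      show "P x \<inter> F i \<subseteq> (\<Union>J\<in>{J\<in>Pow I. i \<in> J}. Q J x)"
      proof
        fix y assume "y \<in> P x \<inter> F i"
        then obtain J where J: "J \<in> Pow I" "y \<in> Q J x" "y \<in> F i" unfolding P_def by blast
        then have "y \<in> atom I F A J" using Q1(2) that by blast
        then have "i \<in> J" using atom_F[of y I F A J i] J that by blast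
        then show "y \<in> (\<Union>J\<in>{J\<in>Pow I. i \<in> J}. Q J x)" using J by blast
      qed
      show "(\<Union>J\<in>{J\<in>Pow I. i \<in> J}. Q J x) \<subseteq> P x \<inter> F i"
      proof
        fix y assume "y \<in> (\<Union>J\<in>{J\<in>Pow I. i \<in> J}. Q J x)"
        then obtain J where J: "J \<in> Pow I" "i \<in> J" "y \<in> Q J x" by blast
        then have "y \<in> atom I F A J" using Q1(2) that by blast
        then have "y \<in> F i" using atom_F[of y I F A J i] J that by blast
        then show "y \<in> P x \<inter> F i" using J unfolding P_def by blast
      qed
    qed
    then show ?thesis using meas_sum[of "{J\<in>Pow I. i \<in> J}" x, OF _ that(1)] AF_atoms[OF that(2), of A F] by (simp add: subset_eq)
  qed
  moreover have "disjoint_family_on P X"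
    unfolding disjoint_family_on_def
  proof (intro ballI impI)
    fix x y assume xy: "x \<in> X" "y \<in> X" "x \<noteq> y"
    show "P x \<inter> P y = {}"
    proof (rule ccontr)
      assume "P x \<inter> P y \<noteq> {}"
      then obtain z J J' where z: "J \<in> Pow I" "J' \<in> Pow I" "z \<in> Q J x" "z \<in> Q J' y"
        unfolding P_def by blast
      show False
      proof (cases "J = J'")
        case True
        then show False using Q2[OF z(1)] z xy unfolding disjoint_family_on_def by blast
      next
        case False
        have "z \<in> atom I F A J" "z \<in> atom I F A J'" using Q1(2) z xy by blast+
        then show False using atom_disj[of J I J' F A] z False by blast
      qed
    qed
  qed
  ultimately show ?thesis by blast
qed

lemma unit_set_measure: "unit_set m S \<Longrightarrow> measure lebesgue S = 1"
  unfolding unit_set_def by (intro measure_eq_emeasure_eq_ennreal) auto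

lemma unit_setD: "unit_set m S \<Longrightarrow> S \<in> sets lebesgue" "unit_set m S \<Longrightarrow> S \<subseteq> {0..<m}"
  unfolding unit_set_def by auto

lemma psi0_exists:
  fixes V :: "'a set" and U :: "'i \<Rightarrow> real set"
  assumes G: "graph V E" and col: "frac_colorable V E k" and kpos: "k > 0"
    and K: "K \<in> sets lebesgue" "K \<subseteq> {lo..hi}" "measure lebesgue K = k"
    and I: "finite I" "\<forall>i\<in>I. U i \<in> sets lebesgue"
  shows "\<exists>\<psi>. (\<forall>v\<in>V. \<psi> v \<in> sets lebesgue \<and> \<psi> v \<subseteq> K \<and> measure lebesgue (\<psi> v) = 1
            \<and> (\<forall>i\<in>I. measure lebesgue (\<psi> v \<inter> U i) = measure lebesgue (K \<inter> U i) / k))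
           \<and> (\<forall>u\<in>V. \<forall>x\<in>V. E u x \<longrightarrow> \<psi> u \<inter> \<psi> x = {})"
proof -
  obtain \<phi> where phi: "frac_coloring V E k \<phi>" using col unfolding frac_colorable_def by blast
  have finV: "finite V" using G unfolding graph_def by blast
  have phs: "\<phi> v \<in> sets lebesgue" "\<phi> v \<subseteq> {0..<k}" "measure lebesgue (\<phi> v) = 1" if "v \<in> V" for v
    using phi that unit_setD unit_set_measure unfolding frac_coloring_def by blast+
  have phd: "\<phi> u \<inter> \<phi> x = {}" if "u \<in> V" "x \<in> V" "E u x" for u x
    using phi that unfolding frac_coloring_def by blast
  define B where "B = {0..<k}"
  have B: "B \<in> sets lebesgue" "B \<subseteq> {0..k}" unfolding B_def by auto
  define \<mu> where "\<mu> X = measure lebesgue (atom V \<phi> B X)" for X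
  define Ind where "Ind = {X\<in>Pow V. \<forall>u\<in>X. \<forall>x\<in>X. \<not> E u x}"
  have finInd: "finite Ind" unfolding Ind_def using finV by simp
  have mu0: "\<mu> X = 0" if XP: "X \<in> Pow V" "X \<notin> Ind" for X
  proof -
    obtain u x where ux: "u \<in> X" "x \<in> X" "E u x" using XP unfolding Ind_def by blast
    have "atom V \<phi> B X = {}"
    proof (rule ccontr)
      assume "atom V \<phi> B X \<noteq> {}"
      then obtain y where y: "y \<in> atom V \<phi> B X" by blast
      have "X \<subseteq> V" using XP by blast
      then have "y \<in> \<phi> u" "y \<in> \<phi> x" using atom_F[OF y] ux by blast+
      then show False using phd[of u x] ux \<open>X \<subseteq> V\<close> by blast
    qed
    then show ?thesis unfolding \<mu>_def by simp
  qed
  have mupos: "\<mu> X \<ge> 0" for X unfolding \<mu>_def by simp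
  have aset: "atom V \<phi> B X \<in> sets lebesgue" if "X \<in> Pow V" for X
    using atom_sets[OF finV B(1), of \<phi> X] phs that by blast
  have sum_all_pow: "(\<Sum>X\<in>G. \<mu> X) = measure lebesgue (\<Union>X\<in>G. atom V \<phi> B X)" if "G \<subseteq> Pow V" for G
    unfolding \<mu>_def
    by (rule measure_UN_atoms[OF finV that, of _ \<phi> B 0 k, symmetric]) (use aset[OF subsetD[OF that]] B(2) in simp_all)
  have sum_Ind: "(\<Sum>X\<in>Ind \<inter> G. \<mu> X) = (\<Sum>X\<in>G. \<mu> X)" if "G \<subseteq> Pow V" for G
  proof -
    have "finite G" using that finV by (meson finite_Pow_iff finite_subset)
    then show ?thesis
      by (intro sum.mono_neutral_left) (use mu0 that in auto)
  qed
  have mu_total: "(\<Sum>X\<in>Ind. \<mu> X) = k"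
  proof -
    have "Ind \<inter> Pow V = Ind" unfolding Ind_def by blast
    then have "(\<Sum>X\<in>Ind. \<mu> X) = (\<Sum>X\<in>Ind \<inter> Pow V. \<mu> X)" by simp
    also have "\<dots> = (\<Sum>X\<in>Pow V. \<mu> X)" by (rule sum_Ind) simp
    also have "\<dots> = measure lebesgue B" using sum_all_pow[of "Pow V"] A_atoms[of B V \<phi>] by simp
    finally show ?thesis using kpos unfolding B_def by simp
  qed
  have mu_v: "(\<Sum>X\<in>Ind \<inter> {X\<in>Pow V. v \<in> X}. \<mu> X) = 1" if "v \<in> V" for v
  proof -
    have "(\<Sum>X\<in>Ind \<inter> {X\<in>Pow V. v \<in> X}. \<mu> X) = (\<Sum>X\<in>{X\<in>Pow V. v \<in> X}. \<mu> X)" by (rule sum_Ind) blast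
    also have "\<dots> = measure lebesgue (B \<inter> \<phi> v)"
      using sum_all_pow[of "{X\<in>Pow V. v \<in> X}"] AF_atoms[OF that, of B \<phi>] by (simp add: subset_eq)
    also have "B \<inter> \<phi> v = \<phi> v" using phs[OF that] unfolding B_def by blast
    finally show ?thesis using phs[OF that] by simp
  qed
  define \<rho> where "\<rho> X = \<mu> X / k" for X
  have rho: "\<forall>X\<in>Ind. \<rho> X \<ge> 0" "(\<Sum>X\<in>Ind. \<rho> X) \<le> 1"
    using mupos kpos mu_total by (auto simp: \<rho>_def sum_divide_distrib[symmetric])
  obtain P where P: "\<forall>X\<in>Ind. P X \<in> sets lebesgue \<and> P X \<subseteq> K
              \<and> measure lebesgue (P X) = \<rho> X * measure lebesgue K
              \<and> (\<forall>i\<in>I. measure lebesgue (P X \<inter> U i) = \<rho> X * measure lebesgue (K \<inter> U i))"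
    "disjoint_family_on P Ind"
    using prop_split[OF I(1) finInd K(1,2) I(2) rho] by blast
  define \<psi> where "\<psi> v = (\<Union>X\<in>Ind \<inter> {X\<in>Pow V. v \<in> X}. P X)" for v
  have Pl: "P X \<in> lmeasurable" if "X \<in> Ind" for X
    using P(1) that lmeas_bounded[of "P X" lo hi] K(2) by blast
  have meas_psi: "measure lebesgue (\<psi> v \<inter> C) = (\<Sum>X\<in>Ind \<inter> {X\<in>Pow V. v \<in> X}. measure lebesgue (P X \<inter> C))"
    if "C \<in> sets lebesgue" for v C
  proof -
    have "\<psi> v \<inter> C = (\<Union>X\<in>Ind \<inter> {X\<in>Pow V. v \<in> X}. P X \<inter> C)" unfolding \<psi>_def by blast
    moreover have "measure lebesgue (\<Union>X\<in>Ind \<inter> {X\<in>Pow V. v \<in> X}. P X \<inter> C)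
        = (\<Sum>X\<in>Ind \<inter> {X\<in>Pow V. v \<in> X}. measure lebesgue (P X \<inter> C))"
    proof (rule measure_UNION')
      show "finite (Ind \<inter> {X \<in> Pow V. v \<in> X})" using finInd by simp
      show "P X \<inter> C \<in> lmeasurable" if "X \<in> Ind \<inter> {X \<in> Pow V. v \<in> X}" for X
        using Pl[of X] that \<open>C \<in> sets lebesgue\<close> fmeasurableI2[of "P X" lebesgue "P X \<inter> C"] by blast
      show "pairwise (\<lambda>i j. disjnt (P i \<inter> C) (P j \<inter> C)) (Ind \<inter> {X \<in> Pow V. v \<in> X})"
        using P(2) unfolding pairwise_def disjnt_def disjoint_family_on_def by blast
    qed
    ultimately show ?thesis by simp
  qed
  have "\<psi> v \<in> sets lebesgue" if "v \<in> V" for v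
    unfolding \<psi>_def using P(1) finInd by (intro sets.finite_UN) auto
  moreover have "\<psi> v \<subseteq> K" for v unfolding \<psi>_def using P(1) by blast
  moreover have "measure lebesgue (\<psi> v) = 1" if "v \<in> V" for v
  proof -
    have "measure lebesgue (\<psi> v) = measure lebesgue (\<psi> v \<inter> UNIV)" by simp
    also have "\<dots> = (\<Sum>X\<in>Ind \<inter> {X\<in>Pow V. v \<in> X}. measure lebesgue (P X \<inter> UNIV))"
      using meas_psi[of UNIV v] by simp
    also have "\<dots> = (\<Sum>X\<in>Ind \<inter> {X\<in>Pow V. v \<in> X}. \<rho> X * k)"
    proof (rule sum.cong)
      fix X assume "X \<in> Ind \<inter> {X\<in>Pow V. v \<in> X}"
      then have "measure lebesgue (P X) = \<rho> X * measure lebesgue K" using P(1) by blast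
      then show "measure lebesgue (P X \<inter> UNIV) = \<rho> X * k" using K(3) by simp
    qed simp
    also have "\<dots> = (\<Sum>X\<in>Ind \<inter> {X\<in>Pow V. v \<in> X}. \<mu> X)"
      using kpos unfolding \<rho>_def by simp
    finally show ?thesis using mu_v[OF that] by simp
  qed
  moreover have "measure lebesgue (\<psi> v \<inter> U i) = measure lebesgue (K \<inter> U i) / k" if "v \<in> V" "i \<in> I" for v i
  proof -
    have "measure lebesgue (\<psi> v \<inter> U i) = (\<Sum>X\<in>Ind \<inter> {X\<in>Pow V. v \<in> X}. measure lebesgue (P X \<inter> U i))"
      using meas_psi[of "U i" v] that I(2) by simp
    also have "\<dots> = (\<Sum>X\<in>Ind \<inter> {X\<in>Pow V. v \<in> X}. \<rho> X * measure lebesgue (K \<inter> U i))"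
    proof (rule sum.cong)
      fix X assume "X \<in> Ind \<inter> {X\<in>Pow V. v \<in> X}"
      then show "measure lebesgue (P X \<inter> U i) = \<rho> X * measure lebesgue (K \<inter> U i)" using P(1) that(2) by blast
    qed simp
    also have "\<dots> = (\<Sum>X\<in>Ind \<inter> {X\<in>Pow V. v \<in> X}. \<mu> X) * measure lebesgue (K \<inter> U i) / k"
      unfolding \<rho>_def by (simp add: sum_distrib_right sum_divide_distrib)
    finally show ?thesis using mu_v[OF that(1)] by simp
  qed
  moreover have "\<psi> u \<inter> \<psi> x = {}" if "u \<in> V" "x \<in> V" "E u x" for u x
  proof (rule ccontr)
    assume "\<psi> u \<inter> \<psi> x \<noteq> {}"
    then obtain y X X' where y: "X \<in> Ind" "u \<in> X" "X' \<in> Ind" "x \<in> X'" "y \<in> P X" "y \<in> P X'"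
      unfolding \<psi>_def by blast
    have "X \<noteq> X'" using y(1,2,4) that(3) unfolding Ind_def by blast
    then show False using P(2) y unfolding disjoint_family_on_def by blast
  qed
  ultimately show ?thesis by blast
qed

lemma coloring_weights:
  fixes V :: "'a set"
  assumes G: "graph V E" and col: "frac_colorable V E k" and kpos: "k > 0"
  shows "\<exists>Ind \<mu>. finite Ind \<and> Ind \<subseteq> Pow V \<and> (\<forall>X\<in>Ind. \<forall>u\<in>X. \<forall>x\<in>X. \<not> E u x)
     \<and> (\<forall>X. \<mu> X \<ge> (0::real)) \<and> (\<Sum>X\<in>Ind. \<mu> X) = k
     \<and> (\<forall>v\<in>V. (\<Sum>X\<in>Ind \<inter> {X. v \<in> X}. \<mu> X) = 1)"
proof -
  obtain \<phi> where phi: "frac_coloring V E k \<phi>" using col unfolding frac_colorable_def by blast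
  have finV: "finite V" using G unfolding graph_def by blast
  have phs: "\<phi> v \<in> sets lebesgue" "\<phi> v \<subseteq> {0..<k}" "measure lebesgue (\<phi> v) = 1" if "v \<in> V" for v
    using phi that unit_setD unit_set_measure unfolding frac_coloring_def by blast+
  have phd: "\<phi> u \<inter> \<phi> x = {}" if "u \<in> V" "x \<in> V" "E u x" for u x
    using phi that unfolding frac_coloring_def by blast
  define B where "B = {0..<k}"
  have B: "B \<in> sets lebesgue" "B \<subseteq> {0..k}" unfolding B_def by auto
  define \<mu> where "\<mu> X = measure lebesgue (atom V \<phi> B X)" for X
  define Ind where "Ind = {X\<in>Pow V. \<forall>u\<in>X. \<forall>x\<in>X. \<not> E u x}"
  have finInd: "finite Ind" unfolding Ind_def using finV by simp
  have mu0: "\<mu> X = 0" if XP: "X \<in> Pow V" "X \<notin> Ind" for X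
  proof -
    obtain u x where ux: "u \<in> X" "x \<in> X" "E u x" using XP unfolding Ind_def by blast
    have "atom V \<phi> B X = {}"
    proof (rule ccontr)
      assume "atom V \<phi> B X \<noteq> {}"
      then obtain y where y: "y \<in> atom V \<phi> B X" by blast
      have "X \<subseteq> V" using XP by blast
      then have "y \<in> \<phi> u" "y \<in> \<phi> x" using atom_F[OF y] ux by blast+
      then show False using phd[of u x] ux \<open>X \<subseteq> V\<close> by blast
    qed
    then show ?thesis unfolding \<mu>_def by simp
  qed
  have mupos: "\<mu> X \<ge> 0" for X unfolding \<mu>_def by simp
  have aset: "atom V \<phi> B X \<in> sets lebesgue" if "X \<in> Pow V" for X
    using atom_sets[OF finV B(1), of \<phi> X] phs that by blast
  have sum_all_pow: "(\<Sum>X\<in>G. \<mu> X) = measure lebesgue (\<Union>X\<in>G. atom V \<phi> B X)" if "G \<subseteq> Pow V" for G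
    unfolding \<mu>_def
    by (rule measure_UN_atoms[OF finV that, of _ \<phi> B 0 k, symmetric]) (use aset[OF subsetD[OF that]] B(2) in simp_all)
  have sum_Ind: "(\<Sum>X\<in>Ind \<inter> G. \<mu> X) = (\<Sum>X\<in>G. \<mu> X)" if "G \<subseteq> Pow V" for G
  proof -
    have "finite G" using that finV by (meson finite_Pow_iff finite_subset)
    then show ?thesis
      by (intro sum.mono_neutral_left) (use mu0 that in auto)
  qed
  have mu_total: "(\<Sum>X\<in>Ind. \<mu> X) = k"
  proof -
    have "Ind \<inter> Pow V = Ind" unfolding Ind_def by blast
    then have "(\<Sum>X\<in>Ind. \<mu> X) = (\<Sum>X\<in>Ind \<inter> Pow V. \<mu> X)" by simp
    also have "\<dots> = (\<Sum>X\<in>Pow V. \<mu> X)" by (rule sum_Ind) simp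
    also have "\<dots> = measure lebesgue B" using sum_all_pow[of "Pow V"] A_atoms[of B V \<phi>] by simp
    finally show ?thesis using kpos unfolding B_def by simp
  qed
  have mu_v: "(\<Sum>X\<in>Ind \<inter> {X. v \<in> X}. \<mu> X) = 1" if "v \<in> V" for v
  proof -
    have "Ind \<inter> {X. v \<in> X} = Ind \<inter> {X\<in>Pow V. v \<in> X}" unfolding Ind_def by blast
    then have "(\<Sum>X\<in>Ind \<inter> {X. v \<in> X}. \<mu> X) = (\<Sum>X\<in>{X\<in>Pow V. v \<in> X}. \<mu> X)"
      using sum_Ind[of "{X\<in>Pow V. v \<in> X}"] by (simp add: subset_eq)
    also have "\<dots> = measure lebesgue (B \<inter> \<phi> v)"
      using sum_all_pow[of "{X\<in>Pow V. v \<in> X}"] AF_atoms[OF that, of B \<phi>] by (simp add: subset_eq)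
    also have "B \<inter> \<phi> v = \<phi> v" using phs[OF that] unfolding B_def by blast
    finally show ?thesis using phs[OF that] by simp
  qed
  have "Ind \<subseteq> Pow V" "\<forall>X\<in>Ind. \<forall>u\<in>X. \<forall>x\<in>X. \<not> E u x" unfolding Ind_def by blast+
  then show ?thesis
    by (intro exI[of _ Ind] exI[of _ \<mu>] conjI) (use finInd mupos mu_total mu_v in auto)
qed

lemma relpow_sym:
  assumes "\<forall>u v. E u v \<longrightarrow> E v u"
  shows "(E ^^ n) x y \<Longrightarrow> (E ^^ n) y x"
proof (induction n arbitrary: x y)
  case 0 then show ?case by (auto elim: relpowp_0_E)
next
  case (Suc n)
  from Suc.prems obtain z where "(E ^^ n) x z" "E z y" by (elim relpowp_Suc_E)
  then have "(E ^^ n) z x" "E y z" using Suc.IH assms by blast+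
  then show ?case by (rule relpowp_Suc_I2[rotated])
qed

lemma relpow_trans: "(E ^^ a) x y \<Longrightarrow> (E ^^ b) y z \<Longrightarrow> (E ^^ (a + b)) x z"
  unfolding relpowp_add by blast

lemma card_no_consec:
  fixes f :: "nat \<Rightarrow> 'a"
  assumes n: "n = 2 * i + 1" and cl: "f n = f 0" and adj: "\<forall>s<n. E (f s) (f (Suc s))"
    and X: "\<forall>u\<in>X. \<forall>x\<in>X. \<not> E u x"
  shows "card {s. s < n \<and> f s \<in> X} \<le> i"
proof -
  define P where "P = {s. s < n \<and> f s \<in> X}"
  define g where "g s = (Suc s) mod n" for s
  have gs: "g s = (if Suc s = n then 0 else Suc s)" if "s < n" for s
    using that unfolding g_def by (cases "Suc s = n") auto
  have "inj_on g {..<n}"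
  proof (rule inj_onI)
    fix x y assume "x \<in> {..<n}" "y \<in> {..<n}" "g x = g y"
    then show "x = y" using gs[of x] gs[of y] by (auto split: if_splits)
  qed
  then have inj: "inj_on g P" by (rule inj_on_subset) (auto simp: P_def)
  have gP: "g ` P \<subseteq> {..<n} - P"
  proof
    fix t assume "t \<in> g ` P"
    then obtain s where s: "s \<in> P" "t = g s" by blast
    have fs: "f (g s) = f (Suc s)"
    proof (cases "Suc s = n")
      case True then show ?thesis using cl by (simp add: g_def)
    next
      case False then have "Suc s < n" using s(1) unfolding P_def by auto
      then show ?thesis by (simp add: g_def)
    qed
    have "E (f s) (f (Suc s))" using adj s(1) unfolding P_def by blast
    then have "f (g s) \<notin> X" using X s(1) fs unfolding P_def by auto
    moreover have "g s < n" using n unfolding g_def by simp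
    ultimately show "t \<in> {..<n} - P" using s(2) unfolding P_def by auto
  qed
  have "card P = card (g ` P)" using card_image[OF inj] by simp
  also have "\<dots> \<le> card ({..<n} - P)" by (rule card_mono) (use gP in auto)
  also have "\<dots> = n - card P"
    by (subst card_Diff_subset) (auto simp: P_def)
  finally have "2 * card P \<le> n" by linarith
  then show ?thesis unfolding P_def using n by linarith
qed

lemma odd_walk_bound:
  fixes V :: "'a set"
  assumes G: "graph V E" and col: "frac_colorable V E k" and kpos: "k > 0"
    and wu: "(E ^^ i) w u" and wx: "(E ^^ i) w x" and ux: "E u x"
  shows "real (2 * i + 1) \<le> k * real i"
proof -
  obtain Ind \<mu> where W: "finite Ind" "Ind \<subseteq> Pow V" "\<forall>X\<in>Ind. \<forall>u\<in>X. \<forall>x\<in>X. \<not> E u x"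
     "\<forall>X. \<mu> X \<ge> (0::real)" "(\<Sum>X\<in>Ind. \<mu> X) = k"
     "\<forall>v\<in>V. (\<Sum>X\<in>Ind \<inter> {X. v \<in> X}. \<mu> X) = 1"
    using coloring_weights[OF G col kpos] by blast
  have symE: "\<forall>u v. E u v \<longrightarrow> E v u" and inV: "\<forall>u v. E u v \<longrightarrow> u \<in> V \<and> v \<in> V"
    using G unfolding graph_def by blast+
  obtain g where g: "g 0 = w" "g i = u" "\<forall>s<i. E (g s) (g (Suc s))" using wu unfolding relpowp_fun_conv by blast
  obtain h where h: "h 0 = w" "h i = x" "\<forall>s<i. E (h s) (h (Suc s))" using wx unfolding relpowp_fun_conv by blast
  define n where "n = 2 * i + 1"
  define f where "f s = (if s \<le> i then g s else h (2 * i + 1 - s))" for s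
  have f0: "f n = f 0" unfolding f_def n_def using g(1) h(1) by simp
  have adj: "\<forall>s<n. E (f s) (f (Suc s))"
  proof (intro allI impI)
    fix s assume s: "s < n"
    consider "s < i" | "s = i" | "i < s" by linarith
    then show "E (f s) (f (Suc s))"
    proof cases
      case 1 then show ?thesis using g(3) unfolding f_def by simp
    next
      case 2
      have "2 * i + 1 - Suc i = i" by simp
      then show ?thesis using 2 g(2) h(2) ux unfolding f_def by simp
    next
      case 3
      define t where "t = 2 * i - s"
      have t: "t < i" "2 * i + 1 - s = Suc t" "2 * i + 1 - Suc s = t" using 3 s unfolding t_def n_def by auto
      have "E (h t) (h (Suc t))" using h(3) t(1) by blast
      then have "E (h (Suc t)) (h t)" using symE by blast
      then show ?thesis using 3 t unfolding f_def by simp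
    qed
  qed
  have fV: "f s \<in> V" if "s < n" for s using adj inV that by blast
  have cardb: "card {s. s < n \<and> f s \<in> X} \<le> i" if "X \<in> Ind" for X
    by (rule card_no_consec[OF n_def f0 adj]) (use W(3) that in blast)
  have "real n = (\<Sum>s<n. (1::real))" by simp
  also have "\<dots> = (\<Sum>s<n. (\<Sum>X\<in>Ind \<inter> {X. f s \<in> X}. \<mu> X))"
    using W(6) fV by (intro sum.cong) auto
  also have "\<dots> = (\<Sum>s<n. (\<Sum>X\<in>Ind. if f s \<in> X then \<mu> X else 0))"
  proof (rule sum.cong)
    fix s assume "s \<in> {..<n}"
    have "Ind \<inter> {X. f s \<in> X} = {X\<in>Ind. f s \<in> X}" by blast
    then show "(\<Sum>X\<in>Ind \<inter> {X. f s \<in> X}. \<mu> X) = (\<Sum>X\<in>Ind. if f s \<in> X then \<mu> X else 0)"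
      using sum.inter_filter[OF W(1), of \<mu> "\<lambda>X. f s \<in> X"] by simp
  qed simp
  also have "\<dots> = (\<Sum>X\<in>Ind. (\<Sum>s<n. if f s \<in> X then \<mu> X else 0))"
    by (rule sum.swap)
  also have "\<dots> = (\<Sum>X\<in>Ind. \<mu> X * card {s. s < n \<and> f s \<in> X})"
  proof (rule sum.cong)
    fix X assume "X \<in> Ind"
    have "(\<Sum>s<n. if f s \<in> X then \<mu> X else 0) = (\<Sum>s\<in>{s\<in>{..<n}. f s \<in> X}. \<mu> X)"
      using sum.inter_filter[of "{..<n}" "\<lambda>_. \<mu> X" "\<lambda>s. f s \<in> X"] by simp
    also have "{s\<in>{..<n}. f s \<in> X} = {s. s < n \<and> f s \<in> X}" by auto
    finally show "(\<Sum>s<n. if f s \<in> X then \<mu> X else 0) = \<mu> X * card {s. s < n \<and> f s \<in> X}"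
      by simp
  qed simp
  also have "\<dots> \<le> (\<Sum>X\<in>Ind. \<mu> X * i)"
    by (intro sum_mono mult_left_mono) (use cardb W(4) in auto)
  also have "\<dots> = k * i" using W(5) by (simp add: sum_distrib_right[symmetric])
  finally show ?thesis unfolding n_def .
qed

lemma geo_even:
  fixes q :: real
  assumes "2 \<le> D"
  shows "(\<Sum>p\<in>{p. 2 \<le> p \<and> p \<le> 2*D-2 \<and> even p}. q^(2*D-2-p)) = (\<Sum>u<D-1. q^(2*u))"
proof (rule sum.reindex_bij_witness[of _ "\<lambda>u. 2*D-2-2*u" "\<lambda>p. (2*D-2-p) div 2"])
  fix u assume "u \<in> {..<D-1}"
  then show "(2*D-2-(2*D-2-2*u)) div 2 = u" "2*D-2-2*u \<in> {p. 2 \<le> p \<and> p \<le> 2*D-2 \<and> even p}"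
    using assms by auto
next
  fix p assume p: "p \<in> {p. 2 \<le> p \<and> p \<le> 2*D-2 \<and> even p}"
  then obtain r where r: "p = 2 * r" "1 \<le> r" "r \<le> D - 1" by (auto elim!: evenE)
  have e: "2*D-2-p = 2 * (D - 1 - r)" using r by simp
  show "2*D-2-2*((2*D-2-p) div 2) = p" unfolding e using r by simp
  show "(2*D-2-p) div 2 \<in> {..<D-1}" unfolding e using r by simp
  show "q^(2*((2*D-2-p) div 2)) = q^(2*D-2-p)" unfolding e by simp
qed

lemma geo_odd:
  fixes q :: real
  assumes "2 \<le> D"
  shows "(\<Sum>p\<in>{p. 2 \<le> p \<and> p \<le> 2*D-2 \<and> odd p}. q^(2*D-2-p)) = (\<Sum>u<D-2. q^(2*u+1))"
proof (rule sum.reindex_bij_witness[of _ "\<lambda>u. 2*D-3-2*u" "\<lambda>p. (2*D-3-p) div 2"])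
  fix u assume "u \<in> {..<D-2}"
  then show "(2*D-3-(2*D-3-2*u)) div 2 = u" "2*D-3-2*u \<in> {p. 2 \<le> p \<and> p \<le> 2*D-2 \<and> odd p}"
    using assms by auto
next
  fix p assume p: "p \<in> {p. 2 \<le> p \<and> p \<le> 2*D-2 \<and> odd p}"
  then obtain r where r: "p = 2 * r + 1" "1 \<le> r" "r \<le> D - 2" by (auto elim!: oddE)
  have e: "2*D-3-p = 2 * (D - 2 - r)" "2*D-2-p = 2 * (D - 2 - r) + 1" using r by auto
  show "2*D-3-2*((2*D-3-p) div 2) = p" unfolding e using r by simp
  show "(2*D-3-p) div 2 \<in> {..<D-2}" unfolding e using r by simp
  show "q^(2*((2*D-3-p) div 2) + 1) = q^(2*D-2-p)" unfolding e by simp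
qed

lemma Ae_Ao:
  fixes q :: real
  assumes "2 \<le> D"
  shows "(\<Sum>u<D-1. q^(2*u)) = 1 + q * (\<Sum>u<D-2. q^(2*u+1))"
proof -
  have "D - 1 = Suc (D - 2)" using assms by simp
  then have "(\<Sum>u<D-1. q^(2*u)) = q^(2*0) + (\<Sum>u<D-2. q^(2*Suc u))"
    using sum.lessThan_Suc_shift[of "\<lambda>u. q^(2*u)" "D-2"] by simp
  also have "(\<Sum>u<D-2. q^(2*Suc u)) = q * (\<Sum>u<D-2. q^(2*u+1))"
    by (simp add: sum_distrib_left power_Suc)
  finally show ?thesis by simp
qed

lemma weights_D2:
  fixes k \<epsilon> :: real and D :: nat
  assumes k: "2 \<le> k" and e: "0 < \<epsilon>" and D: "2 \<le> D"
   and H: "\<epsilon> * (\<Sum>j<D-1. (k-1)^(2*j+2)) + \<epsilon>*((k-1+\<epsilon>)/(k+\<epsilon>)) \<ge> 1/(k+\<epsilon>)"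
  shows "\<exists>\<tau>. (\<forall>p. 0 \<le> \<tau> p) \<and> (\<Sum>p\<in>{p. p < 2*D \<and> odd p}. \<tau> p) \<le> k/(k+\<epsilon>)
     \<and> (\<Sum>p\<in>{p. p < 2*D \<and> even p}. \<tau> p) \<le> k*(k+\<epsilon>-1)/(k+\<epsilon>)
     \<and> (\<forall>i. 1 \<le> i \<and> i < 2*D \<longrightarrow> 1 \<le> (\<Sum>p\<in>{p. i<p \<and> p<2*D \<and> odd (p+i)}. \<tau> p) + (\<Sum>p<i. \<tau> p)/k
            + (if i = 1 then \<epsilon>*(k+\<epsilon>-1)/(k+\<epsilon>) else if odd i then \<epsilon> else 0))"
proof -
  define R where "R = 2 * D"
  define q where "q = k - 1"
  define m where "m = k + \<epsilon>"
  define Ae where "Ae = (\<Sum>u<D-1. q^(2*u))"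
  define Ao where "Ao = (\<Sum>u<D-2. q^(2*u+1))"
  define c where "c = k*(1-\<epsilon>*(m-1))/(m*q*Ae)"
  define a where "a = max 0 c"
  define \<tau>0 where "\<tau>0 = k*(m-1)/m - a*Ae"
  define t0 where "t0 = max 0 (k*(1-\<epsilon>*m)/m - a*Ao)"
  define X where "X = \<tau>0 + t0 + a*(Ae+Ao)"
  define b where "b = max 0 (1 - (X-a)/k)"
  define \<tau> where "\<tau> p = (if p = 0 then \<tau>0 else if p = 1 then t0 else if p = R-1 then b
      else if p < R-1 then a*q^(R-2-p) else 0)" for p
  have R4: "4 \<le> R" using D unfolding R_def by simp
  have q1: "1 \<le> q" using k unfolding q_def by simp
  have m2: "2 < m" using k e unfolding m_def by simp
  have AeAo: "Ae = 1 + q * Ao" unfolding Ae_def Ao_def by (rule Ae_Ao[OF D])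
  have Ao0: "0 \<le> Ao" unfolding Ao_def using q1 by (intro sum_nonneg) simp
  have Ae1: "1 \<le> Ae" using AeAo Ao0 q1 by simp
  have a0: "0 \<le> a" unfolding a_def by simp
  have s2: "(\<Sum>j<D-1. (k-1)^(2*j+2)) = q^2 * Ae"
    unfolding Ae_def q_def sum_distrib_left by (intro sum.cong) (simp_all add: power_add power2_eq_square)
  have H2: "1/m \<le> \<epsilon> * (q^2 * Ae) + \<epsilon> * ((m-1)/m)"
    using H unfolding s2 m_def by (simp add: algebra_simps)
  have "1 = m*(1/m)" using m2 by simp
  also have "\<dots> \<le> m * (\<epsilon> * (q^2 * Ae) + \<epsilon> * ((m-1)/m))"
    using H2 m2 by (intro mult_left_mono) auto
  also have "\<dots> = \<epsilon>*m*q^2*Ae + \<epsilon>*(m-1)" using m2 by (simp add: field_simps)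
  finally have HH: "1 - \<epsilon>*(m-1) \<le> \<epsilon>*m*q^2*Ae" by simp
  have aAe: "a*Ae = k*(1-\<epsilon>*(m-1))/(m*q)" if "0 < c"
  proof -
    have "a = c" using that unfolding a_def by simp
    then show ?thesis unfolding c_def using Ae1 q1 m2 by (simp add: field_simps)
  qed
  have cneg: "1-\<epsilon>*(m-1) \<le> 0" if "\<not> 0 < c"
  proof (rule ccontr)
    assume "\<not> 1-\<epsilon>*(m-1) \<le> 0"
    then have "0 < k*(1-\<epsilon>*(m-1))" using k by simp
    moreover have "0 < m*q*Ae" using Ae1 q1 m2 by simp
    ultimately have "0 < c" unfolding c_def by simp
    then show False using that by simp
  qed
  have a_zero: "a = 0" if "\<not> 0 < c" using that unfolding a_def by simp
  have F1: "a*Ae \<le> k*(m-1)/m"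
  proof (cases "0 < c")
    case True
    have "1-\<epsilon>*(m-1) \<le> q*(m-1)" using q1 m2 e
      by (smt (verit, ccfv_threshold) mult_le_cancel_right1 mult_pos_pos)
    then have "(1-\<epsilon>*(m-1))/q \<le> m-1" using q1 by (simp add: field_simps)
    then have "k*((1-\<epsilon>*(m-1))/q)/m \<le> k*(m-1)/m"
      using k m2 by (intro divide_right_mono mult_left_mono) auto
    then show ?thesis using aAe[OF True] by (simp add: field_simps)
  next
    case False then show ?thesis using a_zero k m2 by simp
  qed
  have Fcov1: "1 \<le> a*Ae + \<tau>0/k + \<epsilon>*(m-1)/m"
  proof -
    have eq: "a*Ae + \<tau>0/k + \<epsilon>*(m-1)/m = a*Ae*(q/k) + (m-1)/m + \<epsilon>*(m-1)/m"
      unfolding \<tau>0_def q_def using k m2 by (simp add: field_simps)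
    show ?thesis
    proof (cases "0 < c")
      case True
      have x: "a*Ae*(q/k) = (1-\<epsilon>*(m-1))/m" using aAe[OF True] q1 k m2 by (simp add: field_simps)
      have "(1-\<epsilon>*(m-1))/m + (m-1)/m + \<epsilon>*(m-1)/m = 1" using m2 by (simp add: field_simps)
      then show ?thesis unfolding eq x by simp
    next
      case False
      have "m \<le> (m-1) + \<epsilon>*(m-1)" using cneg[OF False] by simp
      then have "1 \<le> ((m-1) + \<epsilon>*(m-1))/m" using m2 by (simp add: le_divide_eq)
      then have "1 \<le> (m-1)/m + \<epsilon>*(m-1)/m" by (simp add: add_divide_distrib)
      then show ?thesis unfolding eq using a_zero[OF False] by simp
    qed
  qed
  have Xeq: "X = k*(m-1)/m + t0 + a*Ao" unfolding X_def \<tau>0_def by (simp add: algebra_simps)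
  have AoAe: "Ao \<le> Ae" using AeAo q1 Ao0 mult_right_mono[OF q1 Ao0] by simp
  have aB1: "a \<le> k*q*\<epsilon>"
  proof (cases "0 < c")
    case True
    have "c = k*(1-\<epsilon>*(m-1))/(m*q*Ae)" by (simp add: c_def)
    also have "\<dots> \<le> k*(\<epsilon>*m*q^2*Ae)/(m*q*Ae)"
      using HH k Ae1 q1 m2 by (intro divide_right_mono mult_left_mono) auto
    also have "\<dots> = k*q*\<epsilon>" using Ae1 q1 m2 by (simp add: field_simps power2_eq_square)
    finally show ?thesis using True unfolding a_def by simp
  next
    case False then show ?thesis using a_zero k q1 e by simp
  qed
  have aB2: "a*Ae \<le> k/m"
  proof (cases "0 < c")
    case True
    have "(1-\<epsilon>*(m-1))/q \<le> 1" using q1 m2 e by (simp add: divide_le_eq) (smt (verit) mult_pos_pos)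
    then have "k*((1-\<epsilon>*(m-1))/q)/m \<le> k*1/m"
      using k m2 by (intro divide_right_mono mult_left_mono) auto
    then show ?thesis using aAe[OF True] by (simp add: field_simps)
  next
    case False then show ?thesis using a_zero k m2 by simp
  qed
  have kpos: "0 < k" using k by simp
  have Fodd: "t0 + a*Ao + b \<le> k/m"
  proof (cases "0 \<le> k*(1-\<epsilon>*m)/m - a*Ao")
    case True
    then have t0e: "t0 = k*(1-\<epsilon>*m)/m - a*Ao" unfolding t0_def by simp
    have "X = k*(1-\<epsilon>)" unfolding Xeq t0e using m2 by (simp add: field_simps)
    then have "1 - (X-a)/k = \<epsilon> + a/k" using kpos by (simp add: field_simps)
    then have be: "b = \<epsilon> + a/k" unfolding b_def using e a0 kpos by simp
    have "a/k \<le> q*\<epsilon>" using aB1 kpos by (simp add: divide_le_eq algebra_simps)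
    moreover have "k*(1-\<epsilon>*m)/m = k/m - k*\<epsilon>" using m2 by (simp add: field_simps)
    ultimately show ?thesis unfolding t0e be q_def by (simp add: algebra_simps)
  next
    case False
    then have t0e: "t0 = 0" unfolding t0_def by simp
    have "1 - (X-a)/k = 1/m - a*Ao/k + a/k"
      unfolding Xeq t0e using m2 kpos by (simp add: field_simps)
    then have be: "b = max 0 (1/m - a*Ao/k + a/k)" unfolding b_def by simp
    show ?thesis
    proof (cases "1/m - a*Ao/k + a/k \<le> 0")
      case True
      then have "b = 0" unfolding be by simp
      moreover have "a*Ao \<le> a*Ae" using AoAe a0 by (intro mult_left_mono)
      ultimately show ?thesis using aB2 t0e by simp
    next
      case False
      then have "b = 1/m - a*Ao/k + a/k" unfolding be by simp
      then have "t0 + a*Ao + b = 1/m + a*Ae/k"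
        unfolding t0e AeAo q_def using kpos by (simp add: field_simps)
      also have "\<dots> \<le> 1/m + 1/m"
      proof -
        have "a*Ae/k \<le> (k/m)/k" by (rule divide_right_mono[OF aB2]) (use kpos in simp)
        then show ?thesis using kpos by simp
      qed
      also have "1/m + 1/m \<le> k/m" using m2 k by (simp add: field_simps)
      finally show ?thesis .
    qed
  qed
  have Xb: "k*(1-\<epsilon>) \<le> X"
  proof -
    have "k*(1-\<epsilon>*m)/m - a*Ao \<le> t0" unfolding t0_def by simp
    then have "k*(m-1)/m + (k*(1-\<epsilon>*m)/m - a*Ao) + a*Ao \<le> X" unfolding Xeq by simp
    moreover have "k*(m-1)/m + (k*(1-\<epsilon>*m)/m - a*Ao) + a*Ao = k*(1-\<epsilon>)"
      using m2 by (simp add: field_simps)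
    ultimately show ?thesis by simp
  qed
  have tau_nonneg: "\<forall>p. 0 \<le> \<tau> p"
  proof
    fix p
    have "0 \<le> \<tau>0" using F1 unfolding \<tau>0_def by simp
    moreover have "0 \<le> t0" "0 \<le> b" unfolding t0_def b_def by simp_all
    moreover have "0 \<le> a*q^n" for n using a0 q1 by simp
    ultimately show "0 \<le> \<tau> p" unfolding \<tau>_def by simp
  qed
  have oddR1: "odd (R-1)" using R4 unfolding R_def by (simp add: odd_pos)
  have evR: "even R" unfolding R_def by simp
  have tau_geo: "\<tau> p = a*q^(R-2-p)" if "2 \<le> p" "p \<le> R-2" for p
    using that R4 unfolding \<tau>_def by auto
  have g_even: "(\<Sum>p\<in>{p. 2 \<le> p \<and> p \<le> R-2 \<and> even p}. \<tau> p) = a * Ae"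
  proof -
    have "(\<Sum>p\<in>{p. 2 \<le> p \<and> p \<le> R-2 \<and> even p}. \<tau> p) = (\<Sum>p\<in>{p. 2 \<le> p \<and> p \<le> 2*D-2 \<and> even p}. a*q^(2*D-2-p))"
      using tau_geo unfolding R_def by (intro sum.cong) auto
    also have "\<dots> = a * Ae" unfolding Ae_def sum_distrib_left[symmetric] geo_even[OF D] ..
    finally show ?thesis .
  qed
  have g_odd: "(\<Sum>p\<in>{p. 2 \<le> p \<and> p \<le> R-2 \<and> odd p}. \<tau> p) = a * Ao"
  proof -
    have "(\<Sum>p\<in>{p. 2 \<le> p \<and> p \<le> R-2 \<and> odd p}. \<tau> p) = (\<Sum>p\<in>{p. 2 \<le> p \<and> p \<le> 2*D-2 \<and> odd p}. a*q^(2*D-2-p))"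
      using tau_geo unfolding R_def by (intro sum.cong) auto
    also have "\<dots> = a * Ao" unfolding Ao_def sum_distrib_left[symmetric] geo_odd[OF D] ..
    finally show ?thesis .
  qed
  have finE: "finite {p. 2 \<le> p \<and> p \<le> R-2 \<and> even p}" "finite {p. 2 \<le> p \<and> p \<le> R-2 \<and> odd p}"
    by (rule finite_subset[of _ "{..R}"], auto)+
  have setE: "{p. p < R \<and> even p} = insert 0 {p. 2 \<le> p \<and> p \<le> R-2 \<and> even p}"
  proof (intro set_eqI iffI)
    fix p assume "p \<in> {p. p < R \<and> even p}"
    then have p: "p < R" "even p" by auto
    have "p \<noteq> 1" "p \<noteq> R - 1" using p oddR1 by auto
    then show "p \<in> insert 0 {p. 2 \<le> p \<and> p \<le> R-2 \<and> even p}" using p by auto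
  qed (use R4 in auto)
  have S_even: "(\<Sum>p\<in>{p. p < R \<and> even p}. \<tau> p) = \<tau>0 + a * Ae"
    unfolding setE using finE g_even by (simp add: \<tau>_def)
  have setO: "{p. p < R \<and> odd p} = insert 1 (insert (R-1) {p. 2 \<le> p \<and> p \<le> R-2 \<and> odd p})"
  proof (intro set_eqI iffI)
    fix p assume "p \<in> {p. p < R \<and> odd p}"
    then have p: "p < R" "odd p" by auto
    then have "p \<noteq> 0" by (auto intro: odd_pos)
    then show "p \<in> insert 1 (insert (R-1) {p. 2 \<le> p \<and> p \<le> R-2 \<and> odd p})" using p by auto
  qed (use R4 oddR1 in auto)
  have S_odd: "(\<Sum>p\<in>{p. p < R \<and> odd p}. \<tau> p) = t0 + a * Ao + b"
  proof -
    have "\<tau> 1 = t0" "\<tau> (R-1) = b" using R4 unfolding \<tau>_def by auto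
    moreover have "1 \<noteq> R - 1" using R4 by simp
    ultimately show ?thesis unfolding setO using finE g_odd R4 by simp
  qed
  have setP: "{..<R-1} = insert 0 (insert 1 ({p. 2 \<le> p \<and> p \<le> R-2 \<and> even p} \<union> {p. 2 \<le> p \<and> p \<le> R-2 \<and> odd p}))"
    using R4 by auto
  have pre_top: "(\<Sum>p<R-1. \<tau> p) = X"
  proof -
    have "\<tau> 0 = \<tau>0" "\<tau> 1 = t0" using R4 unfolding \<tau>_def by auto
    moreover have "(\<Sum>p\<in>{p. 2 \<le> p \<and> p \<le> R-2 \<and> even p} \<union> {p. 2 \<le> p \<and> p \<le> R-2 \<and> odd p}. \<tau> p) = a*Ae + a*Ao"
      using g_even g_odd finE by (subst sum.union_disjoint) auto
    ultimately show ?thesis unfolding setP X_def using finE by (simp add: algebra_simps)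
  qed
  define cov where "cov i = (\<Sum>p\<in>{p. i<p \<and> p<R \<and> odd (p+i)}. \<tau> p) + (\<Sum>p<i. \<tau> p)/k
            + (if i = 1 then \<epsilon>*(k+\<epsilon>-1)/(k+\<epsilon>) else if odd i then \<epsilon> else 0)" for i
  have cov1: "1 \<le> cov 1"
  proof -
    have st: "{p. 1<p \<and> p<R \<and> odd (p+1)} = {p. 2 \<le> p \<and> p \<le> R-2 \<and> even p}"
    proof (intro set_eqI iffI)
      fix p assume "p \<in> {p. 1<p \<and> p<R \<and> odd (p+1)}"
      then have p: "1 < p" "p < R" "even p" by auto
      then have "p \<noteq> R - 1" using oddR1 by auto
      then show "p \<in> {p. 2 \<le> p \<and> p \<le> R-2 \<and> even p}" using p by auto
    qed (use R4 in auto)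
    have "cov 1 = a*Ae + \<tau>0/k + \<epsilon>*(m-1)/m"
      unfolding cov_def st g_even using R4 by (simp add: \<tau>_def m_def)
    then show ?thesis using Fcov1 by simp
  qed
  have covR1: "1 \<le> cov (R-1)"
  proof -
    have emp: "{p. R-1<p \<and> p<R \<and> odd (p+(R-1))} = {}" by auto
    have "R - 1 \<noteq> 1" using R4 by simp
    then have "cov (R-1) = X/k + \<epsilon>" unfolding cov_def pre_top emp using oddR1 by simp
    moreover have "1 - \<epsilon> \<le> X/k" using Xb kpos by (simp add: le_divide_eq mult.commute)
    ultimately show ?thesis by simp
  qed
  have covR2: "1 \<le> cov (R-2)"
  proof -
    have st: "{p. R-2<p \<and> p<R \<and> odd (p+(R-2))} = {R-1}"
    proof (intro set_eqI iffI)
      fix p assume "p \<in> {R-1}" then show "p \<in> {p. R-2<p \<and> p<R \<and> odd (p+(R-2))}"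
        using R4 evR by auto
    qed (use R4 in auto)
    moreover have "\<tau> (R-1) = b" using R4 unfolding \<tau>_def by auto
    moreover have "(\<Sum>p<R-1. \<tau> p) = \<tau> (R-2) + (\<Sum>p<R-2. \<tau> p)"
    proof -
      have "R - 1 = Suc (R-2)" using R4 by simp
      then show ?thesis by (simp add: sum.lessThan_Suc)
    qed
    moreover have "\<tau> (R-2) = a" using tau_geo[of "R-2"] R4 by simp
    moreover have "R - 2 \<noteq> 1" "even (R-2)" using R4 evR by auto
    ultimately have "cov (R-2) = b + (X - a)/k" unfolding cov_def st using pre_top by simp
    moreover have "1 - (X-a)/k \<le> b" unfolding b_def by simp
    ultimately show ?thesis by simp
  qed
  have step: "cov i = cov (i+2)" if i: "2 \<le> i" "i + 3 \<le> R" for i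
  proof -
    have st: "{p. i<p \<and> p<R \<and> odd (p+i)} = insert (i+1) {p. i+2<p \<and> p<R \<and> odd (p+(i+2))}"
    proof (intro set_eqI iffI)
      fix p assume "p \<in> {p. i<p \<and> p<R \<and> odd (p+i)}"
      then have p: "i < p" "p < R" "odd (p+i)" by auto
      show "p \<in> insert (i+1) {p. i+2<p \<and> p<R \<and> odd (p+(i+2))}"
      proof (cases "p = i + 1")
        case False
        have "p \<noteq> i + 2" using p(3) by auto
        then show ?thesis using p False by auto
      qed simp
    qed (use i in auto)
    have fin: "finite {p. i+2<p \<and> p<R \<and> odd (p+(i+2))}" by (rule finite_subset[of _ "{..R}"]) auto
    have pre: "(\<Sum>p<i+2. \<tau> p) = (\<Sum>p<i. \<tau> p) + \<tau> i + \<tau> (i+1)" by simp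
    have e: "(if i = 1 then \<epsilon>*(k+\<epsilon>-1)/(k+\<epsilon>) else if odd i then \<epsilon> else 0)
        = (if i+2 = 1 then \<epsilon>*(k+\<epsilon>-1)/(k+\<epsilon>) else if odd (i+2) then \<epsilon> else 0)" using i by simp
    have ti: "\<tau> i = q * \<tau> (i+1)"
    proof -
      have "R - 2 - i = Suc (R - 2 - (i+1))" using i by simp
      then show ?thesis using tau_geo[of i] tau_geo[of "i+1"] i by (simp add: algebra_simps)
    qed
    have z: "\<tau> (i+1) - (\<tau> i + \<tau> (i+1))/k = 0" unfolding ti q_def using kpos by (simp add: field_simps)
    have "cov i = \<tau> (i+1) + (\<Sum>p\<in>{p. i+2<p \<and> p<R \<and> odd (p+(i+2))}. \<tau> p) + (\<Sum>p<i. \<tau> p)/k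
        + (if i = 1 then \<epsilon>*(k+\<epsilon>-1)/(k+\<epsilon>) else if odd i then \<epsilon> else 0)"
      unfolding cov_def st using fin by simp
    moreover have "cov (i+2) = (\<Sum>p\<in>{p. i+2<p \<and> p<R \<and> odd (p+(i+2))}. \<tau> p) + ((\<Sum>p<i. \<tau> p) + \<tau> i + \<tau> (i+1))/k
        + (if i = 1 then \<epsilon>*(k+\<epsilon>-1)/(k+\<epsilon>) else if odd i then \<epsilon> else 0)"
      unfolding cov_def pre e ..
    ultimately show ?thesis using z by (simp add: add_divide_distrib diff_divide_distrib algebra_simps)
  qed
  have allcov: "1 \<le> cov i" if "1 \<le> i" "i < R" for i
    using that
  proof (induction "R - i" arbitrary: i rule: less_induct)
    case less
    show ?case
    proof (cases "i = 1 \<or> i = R - 1 \<or> i = R - 2")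
      case True then show ?thesis using cov1 covR1 covR2 by blast
    next
      case False
      then have "2 \<le> i" "i + 3 \<le> R" using less.prems by auto
      then have "cov i = cov (i+2)" by (rule step)
      moreover have "1 \<le> cov (i+2)" using less.hyps[of "i+2"] \<open>i + 3 \<le> R\<close> by simp
      ultimately show ?thesis by simp
    qed
  qed
  show ?thesis
    apply (rule exI[of _ \<tau>])
    using tau_nonneg S_odd S_even Fodd F1 allcov unfolding \<tau>0_def cov_def R_def m_def by auto
qed

lemma weights_D1:
  fixes k \<epsilon> :: real
  assumes k: "2 \<le> k" and e: "0 < \<epsilon>"
   and H: "\<epsilon>*((k-1+\<epsilon>)/(k+\<epsilon>)) \<ge> 1/(k+\<epsilon>)"
  shows "\<exists>\<tau>. (\<forall>p. 0 \<le> \<tau> p) \<and> (\<Sum>p\<in>{p::nat. p < 2*1 \<and> odd p}. \<tau> p) \<le> k/(k+\<epsilon>)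
     \<and> (\<Sum>p\<in>{p::nat. p < 2*1 \<and> even p}. \<tau> p) \<le> k*(k+\<epsilon>-1)/(k+\<epsilon>)
     \<and> (\<forall>i::nat. 1 \<le> i \<and> i < 2*1 \<longrightarrow> 1 \<le> (\<Sum>p\<in>{p::nat. i<p \<and> p<2*1 \<and> odd (p+i)}. \<tau> p) + (\<Sum>p<i. \<tau> p)/k
            + (if i = 1 then \<epsilon>*(k+\<epsilon>-1)/(k+\<epsilon>) else if odd i then \<epsilon> else 0))"
proof -
  define m where "m = k + \<epsilon>"
  have m2: "2 < m" using k e unfolding m_def by simp
  define \<tau> where "\<tau> (p::nat) = (if p = 0 then k*(m-1)/m else 0)" for p
  have s1: "{p::nat. p < 2*1 \<and> odd p} = {1::nat}" by (auto simp add: numeral_2_eq_2 less_Suc_eq)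
  have s0: "{p::nat. p < 2*1 \<and> even p} = {0::nat}" by (auto simp add: numeral_2_eq_2 less_Suc_eq)
  have s2: "{p::nat. 1<p \<and> p<2*1 \<and> odd (p+1)} = ({}::nat set)" by auto
  have "1 \<le> \<epsilon>*(m-1)"
  proof -
    have "1/m \<le> \<epsilon>*(m-1)/m" using H unfolding m_def by (simp add: algebra_simps)
    then show ?thesis using m2 by (simp add: divide_le_eq)
  qed
  then have "m \<le> (m-1) + \<epsilon>*(m-1)" by simp
  then have "1 \<le> ((m-1) + \<epsilon>*(m-1))/m" using m2 by (simp add: le_divide_eq)
  then have c: "1 \<le> (m-1)/m + \<epsilon>*(m-1)/m" by (simp add: add_divide_distrib)
  have "(\<forall>p. 0 \<le> \<tau> p)" unfolding \<tau>_def using k m2 by simp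
  moreover have "(\<Sum>p\<in>{p::nat. p < 2*1 \<and> odd p}. \<tau> p) \<le> k/(k+\<epsilon>)" unfolding s1 \<tau>_def using k e by simp
  moreover have "(\<Sum>p\<in>{p::nat. p < 2*1 \<and> even p}. \<tau> p) \<le> k*(k+\<epsilon>-1)/(k+\<epsilon>)" unfolding s0 \<tau>_def m_def by simp
  moreover have "1 \<le> (\<Sum>p\<in>{p::nat. i<p \<and> p<2*1 \<and> odd (p+i)}. \<tau> p) + (\<Sum>p<i. \<tau> p)/k
            + (if i = 1 then \<epsilon>*(k+\<epsilon>-1)/(k+\<epsilon>) else if odd i then \<epsilon> else 0)" if "1 \<le> i" "i < 2*1" for i
  proof -
    have i: "i = 1" using that by simp
    have "(k*(m-1)/m)/k = (m-1)/m" using k by simp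
    then show ?thesis unfolding i s2 using c by (simp add: \<tau>_def m_def)
  qed
  ultimately show ?thesis by blast
qed

lemma weights_exist:
  fixes k \<epsilon> :: real and D :: nat
  assumes k: "2 \<le> k" and e: "0 < \<epsilon>" and D: "1 \<le> D"
   and H: "\<epsilon> * (\<Sum>j<D-1. (k-1)^(2*j+2)) + \<epsilon>*((k-1+\<epsilon>)/(k+\<epsilon>)) \<ge> 1/(k+\<epsilon>)"
  shows "\<exists>\<tau>. (\<forall>p. 0 \<le> \<tau> p) \<and> (\<Sum>p\<in>{p. p < 2*D \<and> odd p}. \<tau> p) \<le> k/(k+\<epsilon>)
     \<and> (\<Sum>p\<in>{p. p < 2*D \<and> even p}. \<tau> p) \<le> k*(k+\<epsilon>-1)/(k+\<epsilon>)
     \<and> (\<forall>i. 1 \<le> i \<and> i < 2*D \<longrightarrow> 1 \<le> (\<Sum>p\<in>{p. i<p \<and> p<2*D \<and> odd (p+i)}. \<tau> p) + (\<Sum>p<i. \<tau> p)/k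
            + (if i = 1 then \<epsilon>*(k+\<epsilon>-1)/(k+\<epsilon>) else if odd i then \<epsilon> else 0))"
proof (cases "D = 1")
  case True
  then show ?thesis using weights_D1[OF k e] H by simp
next
  case False
  then show ?thesis using weights_D2[OF k e _ H] D by simp
qed

lemma lmeas_Ico_sub: "A \<in> sets lebesgue \<Longrightarrow> A \<subseteq> {0..<m::real} \<Longrightarrow> A \<in> lmeasurable"
  by (rule lmeas_bounded[of A 0 m]) auto

lemma regions_exist:
  fixes V W :: "'a set" and c :: "'a \<Rightarrow> real set" and \<tau> :: "nat \<Rightarrow> real"
  assumes finW: "finite W" and cw: "\<forall>w\<in>W. unit_set m (c w)" and kpos: "0 < k" and mk: "k < m"
    and tau: "\<forall>p. 0 \<le> \<tau> p" "(\<Sum>p\<in>{p. p < R \<and> odd p}. \<tau> p) \<le> k/m"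
      "(\<Sum>p\<in>{p. p < R \<and> even p}. \<tau> p) \<le> k*(m-1)/m"
    and G: "graph V E" and col: "frac_colorable V E k"
  shows "\<exists>K U \<psi>. K \<in> sets lebesgue \<and> K \<subseteq> {0..<m} \<and> measure lebesgue K = k
    \<and> (\<forall>w\<in>W. measure lebesgue (K \<inter> c w) = k/m)
    \<and> (\<forall>w\<in>W. \<forall>p<R. U w p \<in> sets lebesgue \<and> U w p \<subseteq> K \<and> measure lebesgue (U w p) = \<tau> p
          \<and> (odd p \<longrightarrow> U w p \<subseteq> c w) \<and> (even p \<longrightarrow> U w p \<inter> c w = {}))
    \<and> (\<forall>w\<in>W. \<forall>p<R. \<forall>p'<R. p \<noteq> p' \<longrightarrow> U w p \<inter> U w p' = {})
    \<and> (\<forall>v\<in>V. \<psi> v \<in> sets lebesgue \<and> \<psi> v \<subseteq> K \<and> measure lebesgue (\<psi> v) = 1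
          \<and> (\<forall>w\<in>W. \<forall>p<R. measure lebesgue (\<psi> v \<inter> U w p) = \<tau> p / k))
    \<and> (\<forall>u\<in>V. \<forall>x\<in>V. E u x \<longrightarrow> \<psi> u \<inter> \<psi> x = {})"
proof -
  have m0: "0 < m" using kpos mk by simp
  have cws: "c w \<in> sets lebesgue" "c w \<subseteq> {0..<m}" "measure lebesgue (c w) = 1" if "w \<in> W" for w
    using cw that unit_setD unit_set_measure by blast+
  have A: "{0..<m} \<in> sets lebesgue" "{0..<m} \<subseteq> {0..m}" by auto
  obtain P where P: "\<forall>x\<in>{()}. P x \<in> sets lebesgue \<and> P x \<subseteq> {0..<m}
              \<and> measure lebesgue (P x) = k/m * measure lebesgue {0..<m}
              \<and> (\<forall>i\<in>W. measure lebesgue (P x \<inter> c i) = k/m * measure lebesgue ({0..<m} \<inter> c i))"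
  proof -
    have "finite {()}" "\<forall>i\<in>W. c i \<in> sets lebesgue" "\<forall>x\<in>{()}. 0 \<le> k/m" "(\<Sum>x\<in>{()}. k/m) \<le> 1"
      using cws(1) kpos mk m0 by simp_all
    from prop_split[OF finW this(1) A this(2,3,4)] show ?thesis using that by blast
  qed
  define K where "K = P ()"
  have K: "K \<in> sets lebesgue" "K \<subseteq> {0..<m}" using P unfolding K_def by auto
  have Km: "measure lebesgue K = k" using P m0 unfolding K_def by simp
  have KS: "measure lebesgue (K \<inter> c w) = k/m" if "w \<in> W" for w
  proof -
    have "{0..<m} \<inter> c w = c w" using cws[OF that] by blast
    moreover have "\<forall>i\<in>W. measure lebesgue (K \<inter> c i) = k/m * measure lebesgue ({0..<m} \<inter> c i)"
      using P unfolding K_def by blast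
    ultimately show ?thesis using cws[OF that] that by simp
  qed
  have Kl: "K \<in> lmeasurable" using lmeas_Ico_sub K by blast
  have cl: "c w \<in> lmeasurable" if "w \<in> W" for w using lmeas_Ico_sub cws[OF that] by blast
  have KmS: "measure lebesgue (K - c w) = k*(m-1)/m" if "w \<in> W" for w
  proof -
    have "measure lebesgue (K - c w) = measure lebesgue (K - (K \<inter> c w))" by (simp add: Diff_Int)
    also have "\<dots> = k - k/m"
      using KS[OF that] Km Kl cws[OF that] K
      by (subst measure_Diff) (auto simp: fmeasurable_def)
    also have "\<dots> = k*(m-1)/m" using m0 by (simp add: field_simps)
    finally show ?thesis .
  qed
  have finO: "finite {p. p < R \<and> odd p}" "finite {p. p < R \<and> even p}" by auto
  have "\<forall>w\<in>W. \<exists>Uo. (\<forall>p\<in>{p. p < R \<and> odd p}. Uo p \<in> sets lebesgue \<and> Uo p \<subseteq> K \<inter> c w \<and> measure lebesgue (Uo p) = \<tau> p)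
              \<and> disjoint_family_on Uo {p. p < R \<and> odd p}"
  proof
    fix w assume w: "w \<in> W"
    show "\<exists>Uo. (\<forall>p\<in>{p. p < R \<and> odd p}. Uo p \<in> sets lebesgue \<and> Uo p \<subseteq> K \<inter> c w \<and> measure lebesgue (Uo p) = \<tau> p)
              \<and> disjoint_family_on Uo {p. p < R \<and> odd p}"
      by (rule multi_split[OF finO(1), of "K \<inter> c w" 0 m]) (use K cws[OF w] tau KS[OF w] in auto)
  qed
  from bchoice[OF this] obtain Uo where Uo: "\<forall>w\<in>W. (\<forall>p\<in>{p. p < R \<and> odd p}. Uo w p \<in> sets lebesgue \<and> Uo w p \<subseteq> K \<inter> c w \<and> measure lebesgue (Uo w p) = \<tau> p)
              \<and> disjoint_family_on (Uo w) {p. p < R \<and> odd p}" by (elim exE)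
  have "\<forall>w\<in>W. \<exists>Ue. (\<forall>p\<in>{p. p < R \<and> even p}. Ue p \<in> sets lebesgue \<and> Ue p \<subseteq> K - c w \<and> measure lebesgue (Ue p) = \<tau> p)
              \<and> disjoint_family_on Ue {p. p < R \<and> even p}"
  proof
    fix w assume w: "w \<in> W"
    show "\<exists>Ue. (\<forall>p\<in>{p. p < R \<and> even p}. Ue p \<in> sets lebesgue \<and> Ue p \<subseteq> K - c w \<and> measure lebesgue (Ue p) = \<tau> p)
              \<and> disjoint_family_on Ue {p. p < R \<and> even p}"
      by (rule multi_split[OF finO(2), of "K - c w" 0 m]) (use K cws[OF w] tau KmS[OF w] in auto)
  qed
  from bchoice[OF this] obtain Ue where Ue: "\<forall>w\<in>W. (\<forall>p\<in>{p. p < R \<and> even p}. Ue w p \<in> sets lebesgue \<and> Ue w p \<subseteq> K - c w \<and> measure lebesgue (Ue w p) = \<tau> p)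
              \<and> disjoint_family_on (Ue w) {p. p < R \<and> even p}" by (elim exE)
  define U where "U w p = (if odd p then Uo w p else Ue w p)" for w p
  have U1: "U w p \<in> sets lebesgue \<and> U w p \<subseteq> K \<and> measure lebesgue (U w p) = \<tau> p
          \<and> (odd p \<longrightarrow> U w p \<subseteq> c w) \<and> (even p \<longrightarrow> U w p \<inter> c w = {})" if "w \<in> W" "p < R" for w p
  proof (cases "odd p")
    case True
    have "\<forall>p\<in>{p. p < R \<and> odd p}. Uo w p \<in> sets lebesgue \<and> Uo w p \<subseteq> K \<inter> c w \<and> measure lebesgue (Uo w p) = \<tau> p"
      using Uo that(1) by blast
    then have "Uo w p \<in> sets lebesgue" "Uo w p \<subseteq> K \<inter> c w" "measure lebesgue (Uo w p) = \<tau> p"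
      using True that(2) by simp_all
    then show ?thesis using True unfolding U_def by auto
  next
    case False
    have "\<forall>p\<in>{p. p < R \<and> even p}. Ue w p \<in> sets lebesgue \<and> Ue w p \<subseteq> K - c w \<and> measure lebesgue (Ue w p) = \<tau> p"
      using Ue that(1) by blast
    then have "Ue w p \<in> sets lebesgue" "Ue w p \<subseteq> K - c w" "measure lebesgue (Ue w p) = \<tau> p"
      using False that(2) by simp_all
    then show ?thesis using False unfolding U_def by auto
  qed
  have U2: "U w p \<inter> U w p' = {}" if "w \<in> W" "p < R" "p' < R" "p \<noteq> p'" for w p p'
  proof (cases "odd p = odd p'")
    case True
    show ?thesis
    proof (cases "odd p")
      case True
      then have "disjoint_family_on (Uo w) {p. p < R \<and> odd p}" using Uo that(1) by blast
      then show ?thesis using True \<open>odd p = odd p'\<close> that unfolding U_def disjoint_family_on_def by auto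
    next
      case False
      then have "disjoint_family_on (Ue w) {p. p < R \<and> even p}" using Ue that(1) by blast
      then show ?thesis using False \<open>odd p = odd p'\<close> that unfolding U_def disjoint_family_on_def by auto
    qed
  next
    case False
    then show ?thesis using U1[OF that(1,2)] U1[OF that(1,3)] by (cases "odd p") auto
  qed
  define I where "I = W \<times> {..<R}"
  have finI: "finite I" unfolding I_def using finW by simp
  have Is: "\<forall>i\<in>I. (\<lambda>(w,p). U w p) i \<in> sets lebesgue" unfolding I_def using U1 by auto
  obtain \<psi> where psi: "\<forall>v\<in>V. \<psi> v \<in> sets lebesgue \<and> \<psi> v \<subseteq> K \<and> measure lebesgue (\<psi> v) = 1
            \<and> (\<forall>i\<in>I. measure lebesgue (\<psi> v \<inter> (\<lambda>(w,p). U w p) i) = measure lebesgue (K \<inter> (\<lambda>(w,p). U w p) i) / k)"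
           "\<forall>u\<in>V. \<forall>x\<in>V. E u x \<longrightarrow> \<psi> u \<inter> \<psi> x = {}"
  proof -
    have "K \<subseteq> {0..m}" using K(2) by auto
    from psi0_exists[OF G col kpos K(1) this Km finI Is] show ?thesis using that by blast
  qed
  have psiU: "measure lebesgue (\<psi> v \<inter> U w p) = \<tau> p / k" if "v \<in> V" "w \<in> W" "p < R" for v w p
  proof -
    have "(w,p) \<in> I" using that unfolding I_def by simp
    moreover have "\<forall>i\<in>I. measure lebesgue (\<psi> v \<inter> (\<lambda>(w,p). U w p) i) = measure lebesgue (K \<inter> (\<lambda>(w,p). U w p) i) / k"
      using psi(1) that(1) by blast
    ultimately have "measure lebesgue (\<psi> v \<inter> U w p) = measure lebesgue (K \<inter> U w p) / k" by fastforce
    moreover have "K \<inter> U w p = U w p" using U1[OF that(2,3)] by blast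
    ultimately show ?thesis using U1[OF that(2,3)] by simp
  qed
  show ?thesis
  proof (intro exI[of _ K] exI[of _ U] exI[of _ \<psi>] conjI ballI allI impI)
    show "K \<in> sets lebesgue" "K \<subseteq> {0..<m}" "measure lebesgue K = k" using K Km by simp_all
    show "measure lebesgue (K \<inter> c w) = k/m" if "w \<in> W" for w using KS that by blast
    fix w p assume wp: "w \<in> W" "p < R"
    show "U w p \<in> sets lebesgue" "U w p \<subseteq> K" "measure lebesgue (U w p) = \<tau> p"
      "odd p \<Longrightarrow> U w p \<subseteq> c w" "even p \<Longrightarrow> U w p \<inter> c w = {}" using U1[OF wp] by simp_all
    show "p' < R \<Longrightarrow> p \<noteq> p' \<Longrightarrow> U w p \<inter> U w p' = {}" for p' using U2[OF wp] by blast
  next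
    fix v assume v: "v \<in> V"
    show "\<psi> v \<in> sets lebesgue" "\<psi> v \<subseteq> K" "measure lebesgue (\<psi> v) = 1" using psi(1) v by simp_all
    show "measure lebesgue (\<psi> v \<inter> U w p) = \<tau> p / k" if "w \<in> W" "p < R" for w p using psiU[OF v that] .
  next
    fix u x assume "u \<in> V" "x \<in> V" "E u x"
    then show "\<psi> u \<inter> \<psi> x = {}" using psi(2) by blast
  qed
qed

lemma far_unique:
  assumes far: "pairwise_far E W d" and sym: "\<forall>u v. E u v \<longrightarrow> E v u"
    and w: "w \<in> W" "w' \<in> W" and a: "(E ^^ a) w v" and b: "(E ^^ b) w' v" and ab: "a + b < d"
  shows "w = w'"
proof (rule ccontr)
  assume "w \<noteq> w'"
  have "(E ^^ b) v w'" using relpow_sym[OF sym b] .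
  then have "(E ^^ (a + b)) w w'" using relpow_trans[OF a] by blast
  then show False using far w ab \<open>w \<noteq> w'\<close> unfolding pairwise_far_def by blast
qed

lemma lay_le: "(E ^^ n) w v \<Longrightarrow> (LEAST n. (E ^^ n) w v) \<le> n"
  by (rule Least_le)

lemma lay_walk: "(E ^^ n) w v \<Longrightarrow> (E ^^ (LEAST n. (E ^^ n) w v)) w v"
  by (rule LeastI)

lemma relpow_inV:
  assumes "\<forall>u v. E u v \<longrightarrow> u \<in> V \<and> v \<in> V" "w \<in> V" "(E ^^ n) w v"
  shows "v \<in> V"
proof (cases n)
  case 0 then show ?thesis using assms by (auto elim: relpowp_0_E)
next
  case (Suc n')
  then obtain y where "E y v" using assms(3) by (auto elim: relpowp_Suc_E)
  then show ?thesis using assms(1) by blast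
qed

lemma meas_Un3_disj:
  fixes A B C :: "real set"
  assumes "A \<in> lmeasurable" "B \<in> lmeasurable" "C \<in> lmeasurable" "A \<inter> B = {}" "(A \<union> B) \<inter> C = {}"
  shows "measure lebesgue (A \<union> B \<union> C) = measure lebesgue A + measure lebesgue B + measure lebesgue C"
proof -
  have "measure lebesgue (A \<union> B) = measure lebesgue A + measure lebesgue B"
    using assms by (intro measure_Union) (auto simp: fmeasurable_def)
  moreover have "A \<union> B \<in> lmeasurable" using assms by auto
  ultimately show ?thesis
    using assms by (subst measure_Union) (auto simp: fmeasurable_def)
qed

lemma lset_measure:
  fixes U :: "nat \<Rightarrow> real set" and \<Psi> Q K :: "real set"
  assumes K: "K \<in> sets lebesgue" "K \<subseteq> {0..<m}"
    and U: "\<forall>p<R. U p \<in> sets lebesgue \<and> U p \<subseteq> K \<and> measure lebesgue (U p) = \<tau> p"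
    and Ud: "\<forall>p<R. \<forall>p'<R. p \<noteq> p' \<longrightarrow> U p \<inter> U p' = {}"
    and psi: "\<Psi> \<in> sets lebesgue" "\<Psi> \<subseteq> K" "\<forall>p<R. measure lebesgue (\<Psi> \<inter> U p) = \<tau> p / k"
    and Q: "Q \<in> sets lebesgue" "Q \<subseteq> {0..<m} - K" "measure lebesgue Q = e"
    and i: "i < R"
  shows "(\<Union>p\<in>{p. i<p \<and> p<R \<and> odd (p+i)}. U p) \<union> (\<Psi> \<inter> (\<Union>p\<in>{..<i}. U p)) \<union> Q \<in> sets lebesgue"
    "(\<Union>p\<in>{p. i<p \<and> p<R \<and> odd (p+i)}. U p) \<union> (\<Psi> \<inter> (\<Union>p\<in>{..<i}. U p)) \<union> Q \<subseteq> {0..<m}"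
    "measure lebesgue ((\<Union>p\<in>{p. i<p \<and> p<R \<and> odd (p+i)}. U p) \<union> (\<Psi> \<inter> (\<Union>p\<in>{..<i}. U p)) \<union> Q)
      = (\<Sum>p\<in>{p. i<p \<and> p<R \<and> odd (p+i)}. \<tau> p) + (\<Sum>p<i. \<tau> p)/k + e"
proof -
  define F where "F = {p. i<p \<and> p<R \<and> odd (p+i)}"
  define A1 where "A1 = (\<Union>p\<in>F. U p)"
  define A2 where "A2 = (\<Psi> \<inter> (\<Union>p\<in>{..<i}. U p))"
  have finF: "finite F" unfolding F_def by (rule finite_subset[of _ "{..<R}"]) auto
  have FR: "p < R" if "p \<in> F" for p using that unfolding F_def by simp
  have Ul: "U p \<in> lmeasurable" if "p < R" for p
    using U that lmeas_Ico_sub[of "U p" m] K(2) by blast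
  have A1s: "A1 \<in> sets lebesgue" unfolding A1_def using U FR finF by (intro sets.finite_UN) auto
  have A1K: "A1 \<subseteq> K" unfolding A1_def using U FR by blast
  have A2eq: "A2 = (\<Union>p\<in>{..<i}. \<Psi> \<inter> U p)" unfolding A2_def by blast
  have A2s: "A2 \<in> sets lebesgue" unfolding A2eq using U psi(1) i by (intro sets.finite_UN) auto
  have A2K: "A2 \<subseteq> K" unfolding A2_def using psi(2) by blast
  have l1: "A1 \<in> lmeasurable" using lmeas_Ico_sub[of A1 m] A1s A1K K(2) by blast
  have l2: "A2 \<in> lmeasurable" using lmeas_Ico_sub[of A2 m] A2s A2K K(2) by blast
  have l3: "Q \<in> lmeasurable" using lmeas_Ico_sub[of Q m] Q by blast
  have d12: "A1 \<inter> A2 = {}"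
  proof -
    have "U p \<inter> U p' = {}" if "p \<in> F" "p' < i" for p p'
      using Ud FR[OF that(1)] that i unfolding F_def by auto
    then show ?thesis unfolding A1_def A2_def by blast
  qed
  have d3: "(A1 \<union> A2) \<inter> Q = {}" using A1K A2K Q(2) by blast
  have m1: "measure lebesgue A1 = (\<Sum>p\<in>F. \<tau> p)"
  proof -
    have "measure lebesgue A1 = (\<Sum>p\<in>F. measure lebesgue (U p))"
      unfolding A1_def
    proof (rule measure_UNION'[OF finF])
      show "U p \<in> lmeasurable" if "p \<in> F" for p using Ul FR that by blast
      show "pairwise (\<lambda>i j. disjnt (U i) (U j)) F"
        unfolding pairwise_def disjnt_def using Ud FR by blast
    qed
    also have "\<dots> = (\<Sum>p\<in>F. \<tau> p)" using U FR by (intro sum.cong) auto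
    finally show ?thesis .
  qed
  have m2: "measure lebesgue A2 = (\<Sum>p<i. \<tau> p)/k"
  proof -
    have "measure lebesgue A2 = (\<Sum>p<i. measure lebesgue (\<Psi> \<inter> U p))"
      unfolding A2eq
    proof (rule measure_UNION')
      show "\<Psi> \<inter> U p \<in> lmeasurable" if "p \<in> {..<i}" for p
        using Ul[of p] that i psi(1) fmeasurableI2[of "U p" lebesgue "\<Psi> \<inter> U p"] by auto
      show "pairwise (\<lambda>ia j. disjnt (\<Psi> \<inter> U ia) (\<Psi> \<inter> U j)) {..<i}"
      proof (unfold pairwise_def disjnt_def, intro ballI impI)
        fix x y assume "x \<in> {..<i}" "y \<in> {..<i}" "x \<noteq> y"
        then have "U x \<inter> U y = {}" using Ud i by simp
        then show "(\<Psi> \<inter> U x) \<inter> (\<Psi> \<inter> U y) = {}" by blast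
      qed
    qed simp
    also have "\<dots> = (\<Sum>p<i. \<tau> p / k)" using psi(3) i by (intro sum.cong) auto
    finally show ?thesis by (simp add: sum_divide_distrib)
  qed
  have "A1 \<union> A2 \<union> Q \<in> sets lebesgue" using A1s A2s Q(1) by auto
  moreover have "A1 \<union> A2 \<union> Q \<subseteq> {0..<m}" using A1K A2K K(2) Q(2) by blast
  moreover have "measure lebesgue (A1 \<union> A2 \<union> Q) = (\<Sum>p\<in>F. \<tau> p) + (\<Sum>p<i. \<tau> p)/k + e"
    using meas_Un3_disj[OF l1 l2 l3 d12 d3] m1 m2 Q(3) by simp
  ultimately show "(\<Union>p\<in>{p. i<p \<and> p<R \<and> odd (p+i)}. U p) \<union> (\<Psi> \<inter> (\<Union>p\<in>{..<i}. U p)) \<union> Q \<in> sets lebesgue"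
    "(\<Union>p\<in>{p. i<p \<and> p<R \<and> odd (p+i)}. U p) \<union> (\<Psi> \<inter> (\<Union>p\<in>{..<i}. U p)) \<union> Q \<subseteq> {0..<m}"
    "measure lebesgue ((\<Union>p\<in>{p. i<p \<and> p<R \<and> odd (p+i)}. U p) \<union> (\<Psi> \<inter> (\<Union>p\<in>{..<i}. U p)) \<union> Q)
      = (\<Sum>p\<in>{p. i<p \<and> p<R \<and> odd (p+i)}. \<tau> p) + (\<Sum>p<i. \<tau> p)/k + e"
    unfolding A1_def A2_def F_def by simp_all
qed

definition Lset :: "nat \<Rightarrow> (nat \<Rightarrow> real set) \<Rightarrow> real set \<Rightarrow> real set \<Rightarrow> real set \<Rightarrow> nat \<Rightarrow> real set" where
  "Lset R U \<Psi> ES S i = (\<Union>p\<in>{p. i<p \<and> p<R \<and> odd (p+i)}. U p) \<union> (\<Psi> \<inter> (\<Union>p\<in>{..<i}. U p))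
      \<union> (if i = 1 then ES - S else if odd i then ES else {})"

lemma DL1:
  assumes "\<forall>p<R. even p \<longrightarrow> U p \<inter> S = {}" "0 < R"
  shows "S \<inter> Lset R U \<Psi> ES S 1 = {}"
proof -
  have "U p \<inter> S = {}" if "1 < p" "p < R" "odd (p+1)" for p using assms that by simp
  moreover have "U 0 \<inter> S = {}" using assms by simp
  ultimately show ?thesis unfolding Lset_def by auto
qed

lemma DL2:
  assumes Ud: "\<forall>p<R. \<forall>p'<R. p \<noteq> p' \<longrightarrow> U p \<inter> U p' = {}" and psi: "\<Psi>u \<inter> \<Psi>x = {}"
    and UK: "\<forall>p<R. U p \<subseteq> K" and EK: "ES \<inter> K = {}" and i: "1 \<le> i" "i + 1 < R"
  shows "Lset R U \<Psi>u ES S i \<inter> Lset R U \<Psi>x ES S (i+1) = {}"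
proof -
  define A1 where "A1 = (\<Union>p\<in>{p. i<p \<and> p<R \<and> odd (p+i)}. U p)"
  define A2 where "A2 = \<Psi>u \<inter> (\<Union>p\<in>{..<i}. U p)"
  define A3 where "A3 = (if i = 1 then ES - S else if odd i then ES else {})"
  define B1 where "B1 = (\<Union>p\<in>{p. i+1<p \<and> p<R \<and> odd (p+(i+1))}. U p)"
  define B2 where "B2 = \<Psi>x \<inter> (\<Union>p\<in>{..<i+1}. U p)"
  define B3 where "B3 = (if i+1 = 1 then ES - S else if odd (i+1) then ES else {})"
  have UUd: "U p \<inter> U p' = {}" if "p < R" "p' < R" "p \<noteq> p'" for p p' using Ud that by blast
  have "A1 \<inter> B1 = {}"
  proof -
    have "U p \<inter> U p' = {}" if "i<p" "p<R" "odd (p+i)" "i+1<p'" "p'<R" "odd (p'+(i+1))" for p p'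
    proof -
      have "p \<noteq> p'" using that by auto
      then show ?thesis using UUd that by blast
    qed
    then show ?thesis unfolding A1_def B1_def by blast
  qed
  moreover have "A1 \<inter> B2 = {}"
  proof -
    have "U p \<inter> U p' = {}" if "i<p" "p<R" "p' < i+1" for p p' using UUd that by simp
    then show ?thesis unfolding A1_def B2_def by blast
  qed
  moreover have "A2 \<inter> B1 = {}"
  proof -
    have "U p \<inter> U p' = {}" if "p < i" "i+1<p'" "p'<R" for p p' using UUd that by simp
    then show ?thesis unfolding A2_def B1_def by blast
  qed
  moreover have "A2 \<inter> B2 = {}" unfolding A2_def B2_def using psi by blast
  moreover have "A3 \<inter> B3 = {}" unfolding A3_def B3_def using i by auto
  moreover have "A1 \<subseteq> K" "A2 \<subseteq> K" "B1 \<subseteq> K" "B2 \<subseteq> K"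
  proof -
    have UK': "U p \<subseteq> K" if "p < R" for p using UK that by blast
    have pR: "p < R" if "p < i + 1" for p using that i by simp
    show "A1 \<subseteq> K" unfolding A1_def using UK' by (intro UN_least) simp
    show "B1 \<subseteq> K" unfolding B1_def using UK' by (intro UN_least) simp
    show "A2 \<subseteq> K" unfolding A2_def using UK' pR by (intro Int_lower2[THEN order_trans] UN_least) simp
    show "B2 \<subseteq> K" unfolding B2_def using UK' pR by (intro Int_lower2[THEN order_trans] UN_least) simp
  qed
  moreover have "A3 \<subseteq> ES" "B3 \<subseteq> ES" unfolding A3_def B3_def by auto
  ultimately have "(A1 \<union> A2 \<union> A3) \<inter> (B1 \<union> B2 \<union> B3) = {}" using EK by blast
  then show ?thesis unfolding Lset_def A1_def A2_def A3_def B1_def B2_def B3_def .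
qed

lemma DL3:
  assumes psi: "\<Psi>u \<inter> \<Psi>x = {}" "\<Psi>x \<subseteq> K" and EK: "ES \<inter> K = {}" and R: "2 \<le> R"
  shows "Lset R U \<Psi>u ES S (R-1) \<inter> \<Psi>x = {}"
proof -
  have "{p. R-1<p \<and> p<R \<and> odd (p+(R-1))} = {}" by auto
  then have "Lset R U \<Psi>u ES S (R-1) \<subseteq> \<Psi>u \<union> ES" unfolding Lset_def by auto
  then show ?thesis using psi EK by blast
qed

lemma core:
  fixes V W :: "'a set" and E :: "'a \<Rightarrow> 'a \<Rightarrow> bool" and c :: "'a \<Rightarrow> real set"
    and \<tau> :: "nat \<Rightarrow> real" and D :: nat and k \<epsilon> :: real
  assumes G: "graph V E" and WV: "W \<subseteq> V" and D1: "1 \<le> D" and far: "pairwise_far E W (4*D)"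
    and nobad: "\<forall>w\<in>W. \<forall>u x i. (E^^i) w u \<longrightarrow> (E^^i) w x \<longrightarrow> E u x \<longrightarrow> i < 2*D \<longrightarrow> False"
    and col: "frac_colorable V E k" and k2: "2 \<le> k" and e: "0 < \<epsilon>"
    and pre: "frac_precoloring W (k+\<epsilon>) c"
    and tau: "\<forall>p. 0 \<le> \<tau> p" "(\<Sum>p\<in>{p. p < 2*D \<and> odd p}. \<tau> p) \<le> k/(k+\<epsilon>)"
      "(\<Sum>p\<in>{p. p < 2*D \<and> even p}. \<tau> p) \<le> k*(k+\<epsilon>-1)/(k+\<epsilon>)"
      "\<forall>i. 1 \<le> i \<and> i < 2*D \<longrightarrow> 1 \<le> (\<Sum>p\<in>{p. i<p \<and> p<2*D \<and> odd (p+i)}. \<tau> p) + (\<Sum>p<i. \<tau> p)/k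
            + (if i = 1 then \<epsilon>*(k+\<epsilon>-1)/(k+\<epsilon>) else if odd i then \<epsilon> else 0)"
  shows "precoloring_extends V E (k+\<epsilon>) W c"
proof -
  define m where "m = k + \<epsilon>"
  define R where "R = 2 * D"
  have R2: "2 \<le> R" using D1 unfolding R_def by simp
  have kpos: "0 < k" using k2 by simp
  have mk: "k < m" using e unfolding m_def by simp
  have m0: "0 < m" using kpos mk by simp
  have finV: "finite V" and inV: "\<forall>u v. E u v \<longrightarrow> u \<in> V \<and> v \<in> V"
    and symE: "\<forall>u v. E u v \<longrightarrow> E v u" and irr: "\<forall>u. \<not> E u u"
    using G unfolding graph_def by blast+
  have finW: "finite W" using finite_subset[OF WV finV] .
  have cw: "\<forall>w\<in>W. unit_set m (c w)" using pre unfolding frac_precoloring_def m_def by blast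
  have cws: "c w \<in> sets lebesgue" "c w \<subseteq> {0..<m}" "measure lebesgue (c w) = 1" if "w \<in> W" for w
    using cw that unit_setD unit_set_measure by blast+
  have tau3: "(\<Sum>p\<in>{p. p < R \<and> even p}. \<tau> p) \<le> k*(m-1)/m" using tau(3) unfolding m_def R_def by simp
  have tau2: "(\<Sum>p\<in>{p. p < R \<and> odd p}. \<tau> p) \<le> k/m" using tau(2) unfolding m_def R_def by simp
  obtain K U \<psi> where K: "K \<in> sets lebesgue" "K \<subseteq> {0..<m}" "measure lebesgue K = k"
    and KS: "\<forall>w\<in>W. measure lebesgue (K \<inter> c w) = k/m"
    and U: "\<forall>w\<in>W. \<forall>p<R. U w p \<in> sets lebesgue \<and> U w p \<subseteq> K \<and> measure lebesgue (U w p) = \<tau> p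
          \<and> (odd p \<longrightarrow> U w p \<subseteq> c w) \<and> (even p \<longrightarrow> U w p \<inter> c w = {})"
    and Ud: "\<forall>w\<in>W. \<forall>p<R. \<forall>p'<R. p \<noteq> p' \<longrightarrow> U w p \<inter> U w p' = {}"
    and psi: "\<forall>v\<in>V. \<psi> v \<in> sets lebesgue \<and> \<psi> v \<subseteq> K \<and> measure lebesgue (\<psi> v) = 1
          \<and> (\<forall>w\<in>W. \<forall>p<R. measure lebesgue (\<psi> v \<inter> U w p) = \<tau> p / k)"
    and psid: "\<forall>u\<in>V. \<forall>x\<in>V. E u x \<longrightarrow> \<psi> u \<inter> \<psi> x = {}"
    using regions_exist[OF finW cw kpos mk tau(1) tau2 tau3 G col] by (elim exE conjE) (rule that; assumption)
  define ES where "ES = {0..<m} - K"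
  have ESK: "ES \<inter> K = {}" unfolding ES_def by blast
  have Kl: "K \<in> lmeasurable" using lmeas_Ico_sub K(1,2) by blast
  have ES1: "ES \<in> sets lebesgue" "ES \<subseteq> {0..<m} - K" "measure lebesgue ES = \<epsilon>"
  proof -
    show "ES \<in> sets lebesgue" "ES \<subseteq> {0..<m} - K" unfolding ES_def using K by auto
    have "measure lebesgue ES = measure lebesgue {0..<m} - measure lebesgue K"
      unfolding ES_def using K lmeas_Ico[of 0 m] by (subst measure_Diff) (auto simp: fmeasurable_def)
    then show "measure lebesgue ES = \<epsilon>" using K(3) m0 unfolding m_def by simp
  qed
  have ES2: "ES - c w \<in> sets lebesgue" "ES - c w \<subseteq> {0..<m} - K" "measure lebesgue (ES - c w) = \<epsilon>*(k+\<epsilon>-1)/(k+\<epsilon>)"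
    if w: "w \<in> W" for w
  proof -
    show "ES - c w \<in> sets lebesgue" "ES - c w \<subseteq> {0..<m} - K" using ES1 cws[OF w] by auto
    have cl: "c w \<in> lmeasurable" using lmeas_Ico_sub cws[OF w] by blast
    have un: "measure lebesgue (K \<union> c w) = k + 1 - k/m"
      using measure_Un3[OF Kl cl] K(3) cws[OF w] KS w by simp
    have "ES - c w = {0..<m} - (K \<union> c w)" unfolding ES_def by blast
    then have "measure lebesgue (ES - c w) = measure lebesgue {0..<m} - measure lebesgue (K \<union> c w)"
      using K cws[OF w] lmeas_Ico[of 0 m] by (simp, subst measure_Diff) (auto simp: fmeasurable_def)
    also have "\<dots> = m - (k + 1 - k/m)" using un m0 by simp
    also have "\<dots> = \<epsilon>*(k+\<epsilon>-1)/(k+\<epsilon>)" using m0 unfolding m_def by (simp add: field_simps)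
    finally show "measure lebesgue (ES - c w) = \<epsilon>*(k+\<epsilon>-1)/(k+\<epsilon>)" .
  qed
  define close where "close w v \<longleftrightarrow> (\<exists>n<R. (E^^n) w v)" for w v
  define own where "own v = (SOME w. w \<in> W \<and> close w v)" for v
  define lay where "lay w v = (LEAST n. (E^^n) w v)" for w v
  have d4: "4*D = 2*R" by (simp add: R_def)
  have own: "own v = w" if ow: "w \<in> W" "close w v" for w v
  proof -
    have ex: "\<exists>w. w \<in> W \<and> close w v" using ow by blast
    have o: "own v \<in> W \<and> close (own v) v" unfolding own_def by (rule someI_ex[OF ex])
    obtain a where a: "a < R" "(E^^a) w v" using ow(2) unfolding close_def by blast
    obtain b where b: "b < R" "(E^^b) (own v) v" using o unfolding close_def by blast
    have "a + b < 4*D" using a(1) b(1) d4 by simp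
    then show ?thesis using far_unique[OF far symE ow(1) _ a(2) b(2)] o by simp
  qed
  have layw: "(E^^(lay w v)) w v" "lay w v < R" if cl: "close w v" for w v
  proof -
    obtain n where n: "n < R" "(E^^n) w v" using cl unfolding close_def by blast
    show "(E^^(lay w v)) w v" unfolding lay_def using lay_walk[OF n(2)] .
    show "lay w v < R" unfolding lay_def using lay_le[OF n(2)] n(1) by simp
  qed
  have lay_pos: "1 \<le> lay w v" if cl: "close w v" "v \<noteq> w" for w v
  proof (rule ccontr)
    assume "\<not> 1 \<le> lay w v"
    then have "lay w v = 0" by simp
    then have "(E^^0) w v" using layw(1)[OF cl(1)] by simp
    then show False using cl(2) by (auto elim: relpowp_0_E)
  qed
  define Qs where "Qs w (i::nat) = (if i = 1 then ES - c w else if odd i then ES else {})" for w i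
  have Qs: "Qs w i \<in> sets lebesgue" "Qs w i \<subseteq> {0..<m} - K"
     "measure lebesgue (Qs w i) = (if i = 1 then \<epsilon>*(k+\<epsilon>-1)/(k+\<epsilon>) else if odd i then \<epsilon> else 0)"
    if "w \<in> W" for w i
    using ES1 ES2[OF that] unfolding Qs_def by auto
  define Lw where "Lw w i v = Lset R (U w) (\<psi> v) ES (c w) i" for w i v
  have Lw_good: "Lw w i v \<in> sets lebesgue \<and> Lw w i v \<subseteq> {0..<m} \<and> 1 \<le> measure lebesgue (Lw w i v)"
    if wiv: "w \<in> W" "v \<in> V" "1 \<le> i" "i < R" for w i v
  proof -
    have Uw: "\<forall>p<R. U w p \<in> sets lebesgue \<and> U w p \<subseteq> K \<and> measure lebesgue (U w p) = \<tau> p"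
      using U wiv(1) by blast
    have Udw: "\<forall>p<R. \<forall>p'<R. p \<noteq> p' \<longrightarrow> U w p \<inter> U w p' = {}" using Ud wiv(1) by blast
    have pv: "\<psi> v \<in> sets lebesgue" "\<psi> v \<subseteq> K" "\<forall>p<R. measure lebesgue (\<psi> v \<inter> U w p) = \<tau> p / k"
      using psi wiv(1,2) by blast+
    have eq: "Lw w i v = (\<Union>p\<in>{p. i<p \<and> p<R \<and> odd (p+i)}. U w p) \<union> (\<psi> v \<inter> (\<Union>p\<in>{..<i}. U w p)) \<union> Qs w i"
      unfolding Lw_def Lset_def Qs_def ..
    note lm = lset_measure[OF K(1,2) Uw Udw pv Qs[OF wiv(1)] wiv(4)]
    have "1 \<le> (\<Sum>p\<in>{p. i<p \<and> p<R \<and> odd (p+i)}. \<tau> p) + (\<Sum>p<i. \<tau> p)/k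
            + (if i = 1 then \<epsilon>*(k+\<epsilon>-1)/(k+\<epsilon>) else if odd i then \<epsilon> else 0)"
      using tau(4) wiv(3,4) unfolding R_def by blast
    then show ?thesis unfolding eq using lm by simp
  qed
  define colv where "colv v = (if v \<in> W then c v else if (\<exists>w\<in>W. close w v) then Lw (own v) (lay (own v) v) v else \<psi> v)" for v
  have colv_good: "colv v \<in> sets lebesgue \<and> colv v \<subseteq> {0..<m} \<and> 1 \<le> measure lebesgue (colv v)"
    if v: "v \<in> V" "v \<notin> W" for v
  proof (cases "\<exists>w\<in>W. close w v")
    case True
    then obtain w where w: "w \<in> W" "close w v" by blast
    have o: "own v = w" using own[OF w] .
    have "v \<noteq> w" using v(2) w(1) by blast
    then have "1 \<le> lay w v" "lay w v < R" using lay_pos[OF w(2)] layw(2)[OF w(2)] by simp_all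
    then show ?thesis unfolding colv_def using v True o Lw_good[OF w(1) v(1)] by simp
  next
    case False
    then have "colv v = \<psi> v" unfolding colv_def using v by simp
    moreover have "\<psi> v \<in> sets lebesgue" "\<psi> v \<subseteq> K" "measure lebesgue (\<psi> v) = 1" using psi v(1) by blast+
    ultimately show ?thesis using K(2) by auto
  qed
  have UKw: "\<forall>p<R. U w p \<subseteq> K" if "w \<in> W" for w using U that by blast
  have Udw: "\<forall>p<R. \<forall>p'<R. p \<noteq> p' \<longrightarrow> U w p \<inter> U w p' = {}" if "w \<in> W" for w using Ud that by blast
  have Uev: "\<forall>p<R. even p \<longrightarrow> U w p \<inter> c w = {}" if "w \<in> W" for w using U that by blast
  have psiK: "\<psi> v \<subseteq> K" if "v \<in> V" for v using psi that by blast
  have psid': "\<psi> u \<inter> \<psi> x = {}" if "u \<in> V" "x \<in> V" "E u x" for u x using psid that by blast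
  have far1: "x \<notin> W" if "w \<in> W" "E w x" for w x
  proof
    assume "x \<in> W"
    have "(E^^1) w x" using that(2) by (simp only: relpowp_1)
    moreover have "w \<noteq> x" using irr that(2) by blast
    moreover have "1 < 4*D" using D1 by simp
    ultimately show False using far that(1) \<open>x \<in> W\<close> unfolding pairwise_far_def by blast
  qed
  have caseA: "c w \<inter> colv x = {}" if wx: "w \<in> W" "x \<in> V" "E w x" for w x
  proof -
    have xW: "x \<notin> W" using far1 wx(1,3) .
    have w1: "(E^^1) w x" using wx(3) by (simp only: relpowp_1)
    have cl: "close w x" unfolding close_def using w1 R2 by (intro exI[of _ 1]) simp
    have o: "own x = w" using own[OF wx(1) cl] .
    have "x \<noteq> w" using irr wx(3) by blast
    then have "lay w x = 1" using lay_pos[OF cl] lay_le[OF w1] unfolding lay_def by simp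
    then have "colv x = Lw w 1 x" unfolding colv_def using xW cl wx(1) o by auto
    then show ?thesis unfolding Lw_def using DL1[OF Uev[OF wx(1)]] R2 by simp
  qed
  have half: "colv u \<inter> colv x = {}"
    if ux: "u \<in> V" "x \<in> V" "E u x" "u \<notin> W" "x \<notin> W" "\<exists>w\<in>W. close w u" for u x
  proof -
    obtain w where w: "w \<in> W" "close w u" using ux(6) by blast
    define i where "i = lay w u"
    have o: "own u = w" using own[OF w] .
    have wu: "(E^^i) w u" "i < R" using layw[OF w(2)] unfolding i_def by simp_all
    have "u \<noteq> w" using ux(4) w(1) by blast
    then have i1: "1 \<le> i" using lay_pos[OF w(2)] unfolding i_def by simp
    have wx: "(E^^(i+1)) w x" using relpowp_Suc_I[OF wu(1) ux(3)] by simp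
    have cu: "colv u = Lw w i u" unfolding colv_def i_def using ux(4) w o by auto
    have pux: "\<psi> u \<inter> \<psi> x = {}" using psid' ux(1,2,3) .
    show ?thesis
    proof (cases "\<exists>w'\<in>W. close w' x")
      case True
      then obtain w' where w': "w' \<in> W" "close w' x" by blast
      obtain b where b: "b < R" "(E^^b) w' x" using w'(2) unfolding close_def by blast
      have "(i+1) + b < 4*D" using wu(2) b(1) d4 by simp
      then have ww: "w = w'" using far_unique[OF far symE w(1) w'(1) wx b(2)] by simp
      have clx: "close w x" using w' ww by simp
      define j where "j = lay w x"
      have ox: "own x = w" using own[OF w(1) clx] .
      have wxj: "(E^^j) w x" "j < R" using layw[OF clx] unfolding j_def by simp_all
      have "x \<noteq> w" using ux(5) w(1) by blast
      then have j1: "1 \<le> j" using lay_pos[OF clx] unfolding j_def by simp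
      have cx: "colv x = Lw w j x" unfolding colv_def j_def using ux(5) clx w(1) ox by auto
      have ji: "j \<le> i + 1" unfolding j_def lay_def using lay_le[OF wx] .
      have "(E^^(j+1)) w u" using relpowp_Suc_I[OF wxj(1)] symE ux(3) by simp
      then have ij: "i \<le> j + 1" unfolding i_def lay_def by (rule lay_le)
      have "j \<noteq> i"
      proof
        assume "j = i"
        then have "(E^^i) w x" using wxj(1) by simp
        then show False using nobad w(1) wu ux(3) unfolding R_def by blast
      qed
      then consider "j = i + 1" | "i = j + 1" using ji ij by linarith
      then show ?thesis
      proof cases
        case 1
        have "i + 1 < R" using wxj(2) 1 by simp
        from DL2[OF Udw[OF w(1)] pux UKw[OF w(1)] ESK i1 this, of "c w"]
        show ?thesis unfolding cu cx Lw_def 1 .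
      next
        case 2
        have "\<psi> x \<inter> \<psi> u = {}" using pux by blast
        moreover have "j + 1 < R" using wu(2) 2 by simp
        ultimately have "Lset R (U w) (\<psi> x) ES (c w) j \<inter> Lset R (U w) (\<psi> u) ES (c w) (j+1) = {}"
          by (rule DL2[OF Udw[OF w(1)] _ UKw[OF w(1)] ESK j1])
        then show ?thesis unfolding cu cx Lw_def 2 by (simp add: Int_commute)
      qed
    next
      case False
      then have cx: "colv x = \<psi> x" unfolding colv_def using ux(5) by simp
      have "\<not> close w x" using False w(1) by blast
      then have "\<not> i + 1 < R" using wx unfolding close_def by blast
      then have iR: "i = R - 1" using wu(2) by simp
      show ?thesis unfolding cu cx Lw_def iR by (rule DL3[OF pux psiK[OF ux(2)] ESK R2])
    qed
  qed
  have edge: "colv u \<inter> colv x = {}" if ux: "u \<in> V" "x \<in> V" "E u x" for u x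
  proof (cases "u \<in> W")
    case True
    then have "colv u = c u" unfolding colv_def by simp
    then show ?thesis using caseA[OF True ux(2,3)] by simp
  next
    case uW: False
    show ?thesis
    proof (cases "x \<in> W")
      case True
      have "E x u" using symE ux(3) by blast
      then have "c x \<inter> colv u = {}" using caseA[OF True ux(1)] by simp
      moreover have "colv x = c x" unfolding colv_def using True by simp
      ultimately show ?thesis by (simp add: Int_commute)
    next
      case xW: False
      show ?thesis
      proof (cases "\<exists>w\<in>W. close w u")
        case True
        then show ?thesis using half[OF ux uW xW] by simp
      next
        case uc: False
        show ?thesis
        proof (cases "\<exists>w\<in>W. close w x")
          case True
          have "E x u" using symE ux(3) by blast
          then have "colv x \<inter> colv u = {}" using half[OF ux(2,1) _ xW uW True] by simp
          then show ?thesis by blast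
        next
          case False
          have "colv u = \<psi> u" unfolding colv_def using uW uc by simp
          moreover have "colv x = \<psi> x" unfolding colv_def using xW False by simp
          ultimately show ?thesis using psid' ux by simp
        qed
      qed
    qed
  qed
  have pick: "\<exists>B. B \<in> sets lebesgue \<and> B \<subseteq> colv v \<and> measure lebesgue B = 1" if v: "v \<in> V" "v \<notin> W" for v
  proof -
    have g: "colv v \<in> sets lebesgue" "colv v \<subseteq> {0..<m}" "1 \<le> measure lebesgue (colv v)"
      using colv_good[OF v] by blast+
    have "colv v \<subseteq> {0..m}" using g(2) by auto
    from split_exists[OF g(1) this, of 1] g(3) show ?thesis by simp
  qed
  define c' where "c' v = (if v \<in> W then c v else SOME B. B \<in> sets lebesgue \<and> B \<subseteq> colv v \<and> measure lebesgue B = 1)" for v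
  have c'W: "c' v = c v" if "v \<in> W" for v using that unfolding c'_def by simp
  have c'sub: "c' v \<subseteq> colv v" if "v \<in> V" for v
  proof (cases "v \<in> W")
    case True then show ?thesis unfolding c'_def colv_def by simp
  next
    case False
    have "c' v \<in> sets lebesgue \<and> c' v \<subseteq> colv v \<and> measure lebesgue (c' v) = 1"
      unfolding c'_def using False someI_ex[OF pick[OF that False]] by simp
    then show ?thesis by blast
  qed
  have c'unit: "unit_set m (c' v)" if "v \<in> V" for v
  proof (cases "v \<in> W")
    case True then show ?thesis using cw c'W by simp
  next
    case False
    have B: "c' v \<in> sets lebesgue \<and> c' v \<subseteq> colv v \<and> measure lebesgue (c' v) = 1"
      unfolding c'_def using False someI_ex[OF pick[OF that False]] by simp
    have sub: "c' v \<subseteq> {0..<m}" using B colv_good[OF that False] by blast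
    have "c' v \<in> lmeasurable" using lmeas_Ico_sub[of "c' v" m] B sub by blast
    then have "emeasure lebesgue (c' v) = ennreal (measure lebesgue (c' v))" by (rule emeasure_eq_measure2)
    then have "emeasure lebesgue (c' v) = 1" using B by simp
    then show ?thesis unfolding unit_set_def using B sub by simp
  qed
  have "frac_coloring V E m c'"
    unfolding frac_coloring_def
  proof (intro conjI ballI impI)
    fix v assume "v \<in> V" then show "unit_set m (c' v)" by (rule c'unit)
  next
    fix u x assume "u \<in> V" "x \<in> V" "E u x"
    then show "c' u \<inter> c' x = {}" using edge c'sub by blast
  qed
  then show ?thesis unfolding precoloring_extends_def m_def using c'W by blast
qed

theorem mainTheorem6:
  fixes V W :: "'a set" and E :: "'a \<Rightarrow> 'a \<Rightarrow> bool"
    and d :: nat and k \<epsilon> :: real and c :: "'a \<Rightarrow> real set"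
  assumes "d > 0" and "4 dvd d"
    and "k \<in> \<rat>" and "\<epsilon> > 0"
    and "2 \<le> k" and "k < 2 + 1 / (2 * real (d div 4) - 1)"
    and "\<epsilon> * (\<Sum>j<d div 4 - 1. (k - 1) ^ (2 * j + 2))
           + \<epsilon> * ((k - 1 + \<epsilon>) / (k + \<epsilon>)) \<ge> 1 / (k + \<epsilon>)"
    and "graph V E" and "frac_colorable V E k"
    and "W \<subseteq> V" and "pairwise_far E W d"
    and "frac_precoloring W (k + \<epsilon>) c"
  shows "precoloring_extends V E (k + \<epsilon>) W c"
proof -
  define D where "D = d div 4"
  have dD: "d = 4 * D" using assms(2) unfolding D_def by auto
  have D1: "1 \<le> D" using assms(1) dD by simp
  have far: "pairwise_far E W (4*D)" using assms(11) dD by simp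
  have kpos: "0 < k" using assms(5) by simp
  have kb: "k < 2 + 1 / (2 * real D - 1)" using assms(6) unfolding D_def .
  have nobad: "\<forall>w\<in>W. \<forall>u x i. (E^^i) w u \<longrightarrow> (E^^i) w x \<longrightarrow> E u x \<longrightarrow> i < 2*D \<longrightarrow> False"
  proof (intro ballI allI impI)
    fix w u x i assume h: "w \<in> W" "(E^^i) w u" "(E^^i) w x" "E u x" "i < 2*D"
    have b: "real (2 * i + 1) \<le> k * real i" using odd_walk_bound[OF assms(8) assms(9) kpos h(2,3,4)] .
    show False
    proof (cases "i = 0")
      case True then show False using b by simp
    next
      case False
      have q: "0 < 2 * real D - 1" using D1 by simp
      have ii: "real i \<le> 2 * real D - 1" using h(5) by linarith
      have "k * real i < (2 + 1 / (2 * real D - 1)) * real i"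
        using kb False by (intro mult_strict_right_mono) auto
      also have "\<dots> = 2 * real i + real i / (2 * real D - 1)" by (simp add: algebra_simps)
      also have "real i / (2 * real D - 1) \<le> 1" using ii q by (simp add: divide_le_eq)
      finally have "k * real i < 2 * real i + 1" by simp
      then show False using b by simp
    qed
  qed
  have H: "\<epsilon> * (\<Sum>j<D-1. (k-1)^(2*j+2)) + \<epsilon>*((k-1+\<epsilon>)/(k+\<epsilon>)) \<ge> 1/(k+\<epsilon>)"
    using assms(7) unfolding D_def .
  obtain \<tau> where tau: "(\<forall>p. 0 \<le> \<tau> p)" "(\<Sum>p\<in>{p. p < 2*D \<and> odd p}. \<tau> p) \<le> k/(k+\<epsilon>)"
     "(\<Sum>p\<in>{p. p < 2*D \<and> even p}. \<tau> p) \<le> k*(k+\<epsilon>-1)/(k+\<epsilon>)"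
     "(\<forall>i. 1 \<le> i \<and> i < 2*D \<longrightarrow> 1 \<le> (\<Sum>p\<in>{p. i<p \<and> p<2*D \<and> odd (p+i)}. \<tau> p) + (\<Sum>p<i. \<tau> p)/k
            + (if i = 1 then \<epsilon>*(k+\<epsilon>-1)/(k+\<epsilon>) else if odd i then \<epsilon> else 0))"
    using weights_exist[OF assms(5) assms(4) D1 H] by (elim exE conjE) (rule that; assumption)
  show ?thesis
    by (rule core[OF assms(8) assms(10) D1 far nobad assms(9) assms(5) assms(4) assms(12) tau])
qed

end
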